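(* Let $m\ge4$ be an integer. There is $\epsilon_0>0$ such that for every $s_0>0$ and every $\xi\in X^2$ with $\|\xi\|_{X^2}\le\epsilon_0$, there exist $s=s(\xi,s_0)>0$ and $\tilde\xi\in X^2$ with $$Q^{s_0}+\xi=Q^s+\tilde\xi,\qquad(\tilde\xi,h^s)_{L^2(r\,dr)}=0,\qquad\Big|\frac{s}{s_0}-1\Big|+\|\tilde\xi\|_{X^2}\lesssim\|\xi\|_{X^2}.$$
   Context: $Q(r)=\pi-2\arctan(r^m)$, $h(r)=\sin Q(r)=\frac{2r^m}{1+r^{2m}}$, $Q^s(r)=Q(r/s)$, $h^s(r)=h(r/s)$. $\|w\|_{X^2}^2=\int_0^\infty(w_r^2+m^2\frac{w^2}{r^2})r\,dr$, and $(f,g)_{L^2(r\,dr)}=\int_0^\infty fg\,r\,dr$. The implicit constant depends only on $m$. *)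

theory Defs
  imports "HOL-Analysis.Analysis"
begin

definition Qm :: "nat \<Rightarrow> real \<Rightarrow> real" where
  "Qm m r = pi - 2 * arctan (r ^ m)"

definition hm :: "nat \<Rightarrow> real \<Rightarrow> real" where
  "hm m r = 2 * r ^ m / (1 + r ^ (2 * m))"

definition Qs :: "nat \<Rightarrow> real \<Rightarrow> real \<Rightarrow> real" where
  "Qs m s r = Qm m (r / s)"

definition hs :: "nat \<Rightarrow> real \<Rightarrow> real \<Rightarrow> real" where
  "hs m s r = hm m (r / s)"

text \<open>w' is a weak derivative of w on (0,oo) (w locally absolutely continuous
  with derivative w'), and the X^2 energy is finite.\<close>
definition X2_deriv :: "nat \<Rightarrow> (real \<Rightarrow> real) \<Rightarrow> (real \<Rightarrow> real) \<Rightarrow> bool" where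
  "X2_deriv m w w' \<longleftrightarrow>
     (\<forall>a b. 0 < a \<longrightarrow> a \<le> b \<longrightarrow>
        set_integrable lborel {a..b} w' \<and> w b - w a = (LINT r:{a..b}|lborel. w' r)) \<and>
     set_integrable lborel {0<..} (\<lambda>r. ((w' r)\<^sup>2 + (real m)\<^sup>2 * (w r)\<^sup>2 / r\<^sup>2) * r)"

definition inX2 :: "nat \<Rightarrow> (real \<Rightarrow> real) \<Rightarrow> bool" where
  "inX2 m w \<longleftrightarrow> (\<exists>w'. X2_deriv m w w')"

text \<open>The norm; the weak derivative is unique a.e., so the choice is irrelevant.\<close>
definition X2_norm :: "nat \<Rightarrow> (real \<Rightarrow> real) \<Rightarrow> real" where
  "X2_norm m w = sqrt (LINT r:{0<..}|lborel.
      (((SOME w'. X2_deriv m w w') r)\<^sup>2 + (real m)\<^sup>2 * (w r)\<^sup>2 / r\<^sup>2) * r)"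

definition L2r_inner :: "(real \<Rightarrow> real) \<Rightarrow> (real \<Rightarrow> real) \<Rightarrow> real" where
  "L2r_inner f g = (LINT r:{0<..}|lborel. f r * g r * r)"

end

theory Submission
  imports Defs "HOL-Probability.Sinc_Integral"
begin

lemma D_pow_inv:
  assumes "\<sigma> \<noteq> 0"
  shows "((\<lambda>\<sigma>. (r/\<sigma>)^n) has_real_derivative (- (real n * (r/\<sigma>)^n / \<sigma>))) (at \<sigma>)"
proof (induction n)
  case 0 then show ?case by simp
next
  case (Suc n)
  have d1: "((\<lambda>\<sigma>. r/\<sigma>) has_real_derivative (- (r/\<sigma>^2))) (at \<sigma>)"
    using assms by (auto intro!: derivative_eq_intros simp: power2_eq_square)
  have "((\<lambda>\<sigma>. (r/\<sigma>) * (r/\<sigma>)^n) has_real_derivative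
     ((r/\<sigma>) * (- (real n * (r/\<sigma>)^n / \<sigma>)) + (- (r/\<sigma>^2)) * (r/\<sigma>)^n)) (at \<sigma>)"
    by (rule DERIV_mult'[OF d1 Suc])
  then show ?case unfolding power_Suc
    by (rule DERIV_cong) (use assms in \<open>simp add: field_simps power2_eq_square\<close>)
qed

lemma D_pow_r:
  assumes "r \<noteq> 0" "s \<noteq> 0"
  shows "((\<lambda>r. (r/s)^n) has_real_derivative (real n * (r/s)^n / r)) (at r)"
proof (induction n)
  case 0 then show ?case by simp
next
  case (Suc n)
  have d1: "((\<lambda>r. r/s) has_real_derivative (1/s)) (at r)"
    using assms by (auto intro!: derivative_eq_intros)
  have "((\<lambda>r. (r/s) * (r/s)^n) has_real_derivative
     ((r/s) * (real n * (r/s)^n / r) + (1/s) * (r/s)^n)) (at r)"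
    by (rule DERIV_mult'[OF d1 Suc])
  then show ?case unfolding power_Suc
    by (rule DERIV_cong) (use assms in \<open>simp add: field_simps power2_eq_square\<close>)
qed

lemma hm_alt: "hm m v = 2 * v^m / (1 + (v^m)^2)"
  by (simp add: hm_def power_mult[symmetric] mult.commute)

lemma DQ_sigma:
  assumes "\<sigma> \<noteq> 0"
  shows "((\<lambda>\<sigma>. Qm m (r/\<sigma>)) has_real_derivative (real m * hm m (r/\<sigma>) / \<sigma>)) (at \<sigma>)"
proof -
  have "((\<lambda>\<sigma>. arctan ((r/\<sigma>)^m)) has_real_derivative
       inverse (1 + ((r/\<sigma>)^m)^2) * (- (real m * (r/\<sigma>)^m / \<sigma>))) (at \<sigma>)"
    by (rule DERIV_chain2[OF DERIV_arctan D_pow_inv[OF assms]])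
  then have "((\<lambda>\<sigma>. pi - 2 * arctan ((r/\<sigma>)^m)) has_real_derivative
       0 - 2 * (inverse (1 + ((r/\<sigma>)^m)^2) * (- (real m * (r/\<sigma>)^m / \<sigma>)))) (at \<sigma>)"
    by (intro DERIV_diff DERIV_cmult DERIV_const)
  then show ?thesis
    by (simp add: Qm_def hm_alt field_simps)
qed

lemma DQ_r:
  assumes "r \<noteq> 0" "s \<noteq> 0"
  shows "((\<lambda>r. Qm m (r/s)) has_real_derivative (- (real m * hm m (r/s) / r))) (at r)"
proof -
  have "((\<lambda>r. arctan ((r/s)^m)) has_real_derivative
       inverse (1 + ((r/s)^m)^2) * (real m * (r/s)^m / r)) (at r)"
    by (rule DERIV_chain2[OF DERIV_arctan D_pow_r[OF assms(1,2)]])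
  then have "((\<lambda>r. pi - 2 * arctan ((r/s)^m)) has_real_derivative
       0 - 2 * (inverse (1 + ((r/s)^m)^2) * (real m * (r/s)^m / r))) (at r)"
    by (intro DERIV_diff DERIV_cmult DERIV_const)
  then show ?thesis
    by (simp add: Qm_def hm_alt field_simps)
qed

lemma hm_sin: "hm m v = sin (Qm m v)"
proof -
  let ?x = "v ^ m"
  have "sin (Qm m v) = sin (2 * arctan ?x)" by (simp add: Qm_def)
  also have "\<dots> = 2 * sin (arctan ?x) * cos (arctan ?x)" by (rule sin_double)
  also have "\<dots> = 2 * ?x / (1 + ?x^2)"
    by (simp add: sin_arctan cos_arctan add_pos_nonneg)
  finally show ?thesis by (simp add: hm_alt)
qed

lemma Dh_sigma:
  assumes "\<sigma> \<noteq> 0"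
  shows "((\<lambda>\<sigma>. hm m (r/\<sigma>)) has_real_derivative
     (cos (Qm m (r/\<sigma>)) * (real m * hm m (r/\<sigma>) / \<sigma>))) (at \<sigma>)"
proof -
  have "((\<lambda>\<sigma>. sin (Qm m (r/\<sigma>))) has_real_derivative
     (cos (Qm m (r/\<sigma>)) * (real m * hm m (r/\<sigma>) / \<sigma>))) (at \<sigma>)"
    by (rule DERIV_chain2[OF DERIV_sin DQ_sigma[OF assms]])
  then show ?thesis by (simp add: hm_sin[symmetric])
qed


definition gg :: "real \<Rightarrow> real" where "gg v = inverse (1 + v^2)"

lemma gg_pos: "gg v > 0" by (simp add: gg_def add_pos_nonneg)

lemma h_nonneg: "v \<ge> 0 \<Longrightarrow> hm m v \<ge> 0"
  by (simp add: hm_alt add_pos_nonneg)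

lemma h_le1: "hm m v \<le> 1"
proof -
  have "2 * v^m \<le> 1 + (v^m)^2" using sum_squares_ge_zero[of "v^m - 1" 0]
    by (simp add: power2_eq_square algebra_simps)
  then show ?thesis by (simp add: hm_alt add_pos_nonneg)
qed

lemma h_le_pow: "v \<ge> 0 \<Longrightarrow> hm m v \<le> 2 * v^m"
proof -
  assume "v \<ge> 0"
  then have x: "v^m \<ge> 0" by simp
  have "2 * v^m / (1 + (v^m)^2) \<le> 2 * v^m / 1"
    using x by (intro divide_left_mono) (auto simp: add_pos_nonneg)
  then show ?thesis by (simp add: hm_alt)
qed

lemma frac_inv_aux: "(x::real) > 0 \<Longrightarrow> 2 * x / (1 + x^2) \<le> 2 / x"
  by (simp add: field_simps add_pos_nonneg power2_eq_square)

lemma h_le_inv: "v > 0 \<Longrightarrow> hm m v \<le> 2 / v^m"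
  using frac_inv_aux[of "v^m"] by (simp add: hm_alt)

lemma Q_bounds: "0 \<le> Qm m v" "Qm m v \<le> 2 * pi"
  using arctan_bounded[of "v^m"] by (auto simp: Qm_def)

lemma h_lower: assumes "1/2 \<le> v" "v \<le> 1" shows "hm m v \<ge> (1/2)^m"
proof -
  have x0: "0 \<le> v^m" "v^m \<le> 1" using assms by (auto intro: power_le_one)
  have x1: "(1/2)^m \<le> v^m" using assms by (intro power_mono) auto
  have "(v^m)^2 \<le> 1" using x0 by (simp add: power_le_one)
  then have "v^m * (1 + (v^m)^2) \<le> v^m * 2" using x0 by (intro mult_left_mono) auto
  then have "v^m \<le> 2 * v^m / (1 + (v^m)^2)"
    by (simp add: le_divide_eq add_pos_nonneg mult.commute)
  then show ?thesis using x1 by (simp add: hm_alt)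
qed

lemma h_compare:
  assumes "u > 0" "v > 0" "v \<le> 2 * u" "u \<le> 2 * v"
  shows "hm m v \<le> 8^m * hm m u"
proof -
  have "v^m \<le> (2 * u)^m" using assms by (intro power_mono) auto
  then have a: "v^m \<le> 2^m * u^m" by (simp add: power_mult_distrib)
  have "u^m \<le> (2 * v)^m" using assms by (intro power_mono) auto
  then have b: "u^m \<le> 2^m * v^m" by (simp add: power_mult_distrib)
  have b2: "(u^m)^2 \<le> 4^m * (v^m)^2"
  proof -
    have "(u^m)^2 \<le> (2^m * v^m)^2" using b assms by (intro power_mono) auto
    also have "\<dots> = (2^m)^2 * (v^m)^2" by (simp add: power_mult_distrib)
    also have "((2::real)^m)^2 = 4^m"
    proof -
      have "(4::real)^m = (2^2)^m" by simp
      also have "\<dots> = (2^m)^2" by (simp only: power_mult[symmetric] mult.commute)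
      finally show ?thesis by simp
    qed
    finally show ?thesis .
  qed
  have p4: "(1::real) \<le> 4^m" by simp
  have c: "1 + (u^m)^2 \<le> 4^m * (1 + (v^m)^2)" unfolding distrib_left using b2 p4 by linarith
  have pu: "u^m > 0" "v^m > 0" using assms by auto
  have "hm m v = 2 * v^m / (1 + (v^m)^2)" by (simp add: hm_alt)
  also have "\<dots> \<le> 2 * (2^m * u^m) / ((1 + (u^m)^2) / 4^m)"
    using a c pu by (intro frac_le) (auto simp: add_pos_nonneg field_simps)
  also have "\<dots> = (2^m * 4^m) * (2 * u^m / (1 + (u^m)^2))" by (simp add: field_simps)
  also have "(2::real)^m * 4^m = 8^m" by (simp add: power_mult_distrib[symmetric])
  finally show ?thesis by (simp add: hm_alt)
qed

lemma P3: assumes "m \<ge> 4" "v > 0" shows "hm m v * v \<le> 8 * gg v"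
proof (cases "v \<le> 1")
  case True
  have "hm m v * v \<le> 1 * 1" using h_le1[of m v] assms True h_nonneg[of v m]
    by (intro mult_mono) auto
  moreover have "8 * gg v \<ge> 4"
  proof -
    have "v^2 \<le> 1" using True assms by (simp add: power_le_one)
    then show ?thesis by (simp add: gg_def field_simps add_pos_nonneg)
  qed
  ultimately show ?thesis by simp
next
  case False
  then have v1: "v \<ge> 1" by simp
  have "v^3 \<le> v^m" using v1 assms by (intro power_increasing) auto
  then have "2 / v^m \<le> 2 / v^3" using assms by (intro divide_left_mono) auto
  then have "hm m v \<le> 2 / v^3" using h_le_inv[OF assms(2), of m] by simp
  then have "hm m v * v \<le> 2 / v^3 * v" using assms by (intro mult_right_mono) auto
  also have "\<dots> = 2 / v^2" using assms by (simp add: power2_eq_square power3_eq_cube)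
  also have "\<dots> \<le> 8 * gg v"
  proof -
    have "1 \<le> v^2" using v1 by (simp add: one_le_power)
    moreover have "0 < v^2" using v1 by simp
    ultimately show ?thesis by (simp add: gg_def field_simps add_pos_nonneg pos_divide_le_eq)
  qed
  finally show ?thesis .
qed

lemma P4: assumes "m \<ge> 4" "v > 0" shows "(hm m v)^2 * v \<le> 8 * gg v"
proof -
  have "hm m v * hm m v \<le> hm m v" using h_le1[of m v] h_nonneg[of v m] assms
    by (simp add: mult_right_le_one_le)
  then have "(hm m v)^2 * v \<le> hm m v * v" using assms
    by (simp add: power2_eq_square mult_right_mono)
  with P3[OF assms] show ?thesis by simp
qed

lemma P1: assumes "m \<ge> 4" "v > 0" shows "(hm m v)^2 / v \<le> 8 * gg v"
proof (cases "v \<le> 1")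
  case True
  have "v^m \<le> v^1" using True assms by (intro power_decreasing) auto
  then have vm: "v^m \<le> v" by simp
  have "hm m v \<le> 2 * v" using h_le_pow[of v m] vm assms by simp
  then have "(hm m v)^2 \<le> (2 * v)^2" using h_nonneg[of v m] assms by (intro power_mono) auto
  then have "(hm m v)^2 / v \<le> (2 * v)^2 / v" using assms by (intro divide_right_mono) auto
  also have "\<dots> = 4 * v" using assms by (simp add: power2_eq_square)
  also have "\<dots> \<le> 4" using True by simp
  also have "4 \<le> 8 * gg v"
  proof -
    have "v^2 \<le> 1" using True assms by (simp add: power_le_one)
    then show ?thesis by (simp add: gg_def field_simps add_pos_nonneg)
  qed
  finally show ?thesis .
next
  case False
  then have v1: "v \<ge> 1" by simp
  have "v^1 \<le> v^m" using v1 assms by (intro power_increasing) auto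
  then have "2 / v^m \<le> 2 / v" using assms by (intro divide_left_mono) auto
  then have "hm m v \<le> 2 / v" using h_le_inv[OF assms(2), of m] by simp
  then have "(hm m v)^2 \<le> (2 / v)^2" using h_nonneg[of v m] assms by (intro power_mono) auto
  then have "(hm m v)^2 / v \<le> (2 / v)^2 / v" using assms by (intro divide_right_mono) auto
  also have "\<dots> = 4 / v^3" using assms by (simp add: power2_eq_square power3_eq_cube)
  also have "\<dots> \<le> 4 / v^2" using v1 by (intro divide_left_mono) (auto simp: power2_eq_square power3_eq_cube)
  also have "\<dots> \<le> 8 * gg v"
  proof -
    have "1 \<le> v^2" using v1 by (simp add: one_le_power)
    moreover have "0 < v^2" using v1 by simp
    ultimately show ?thesis by (simp add: gg_def field_simps add_pos_nonneg pos_divide_le_eq)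
  qed
  finally show ?thesis .
qed

lemma P2: assumes "m \<ge> 4" "v > 0" shows "(hm m v)^2 * v^3 \<le> 8 * gg v"
proof (cases "v \<le> 1")
  case True
  have "(hm m v)^2 * v^3 \<le> 1 * 1" using h_le1[of m v] assms True h_nonneg[of v m]
    by (intro mult_mono) (auto simp: power_le_one)
  moreover have "8 * gg v \<ge> 4"
  proof -
    have "v^2 \<le> 1" using True assms by (simp add: power_le_one)
    then show ?thesis by (simp add: gg_def field_simps add_pos_nonneg)
  qed
  ultimately show ?thesis by simp
next
  case False
  then have v1: "v \<ge> 1" by simp
  have "v^4 \<le> v^m" using v1 assms by (intro power_increasing) auto
  then have "2 / v^m \<le> 2 / v^4" using assms by (intro divide_left_mono) auto
  then have "hm m v \<le> 2 / v^4" using h_le_inv[OF assms(2), of m] by simp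
  then have "(hm m v)^2 \<le> (2/v^4)^2" using h_nonneg[of v m] assms by (intro power_mono) auto
  then have "(hm m v)^2 * v^3 \<le> (2/v^4)^2 * v^3" using assms by (intro mult_right_mono) auto
  also have "\<dots> = 4 / v^5" using assms by (simp add: field_simps power2_eq_square)
  also have "\<dots> \<le> 4 / v^2" using v1 assms by (intro divide_left_mono power_increasing) auto
  also have "\<dots> \<le> 8 * gg v"
  proof -
    have "1 \<le> v^2" using v1 by (simp add: one_le_power)
    moreover have "0 < v^2" using v1 by simp
    ultimately show ?thesis by (simp add: gg_def field_simps add_pos_nonneg pos_divide_le_eq)
  qed
  finally show ?thesis .
qed


lemma mvt_exists:
  fixes f f' :: "real \<Rightarrow> real"
  assumes "\<And>z. min a b \<le> z \<Longrightarrow> z \<le> max a b \<Longrightarrow> (f has_real_derivative f' z) (at z)"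
  shows "\<exists>z. min a b \<le> z \<and> z \<le> max a b \<and> f b - f a = (b - a) * f' z"
proof (cases a b rule: linorder_cases)
  case less
  then obtain z where "a < z" "z < b" "f b - f a = (b - a) * f' z"
    using MVT2[OF less, of f f'] assms by auto
  then show ?thesis using less by (intro exI[of _ z]) auto
next
  case equal then show ?thesis by (intro exI[of _ a]) auto
next
  case greater
  then obtain z where "b < z" "z < a" "f a - f b = (a - b) * f' z"
    using MVT2[OF greater, of f f'] assms by auto
  then show ?thesis using greater by (intro exI[of _ z]) (auto simp: algebra_simps)
qed

lemma range_compare:
  assumes "s0 > 0" "r > 0" "s0/2 \<le> z" "z \<le> 2 * s0"
  shows "hm m (r/z) \<le> 8^m * hm m (r/s0)" "hm m (r/s0) \<le> 8^m * hm m (r/z)"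
proof -
  have z: "z > 0" using assms by simp
  have 1: "r/z \<le> 2 * (r/s0)" using assms z by (simp add: field_simps)
  have 2: "r/s0 \<le> 2 * (r/z)" using assms z by (simp add: field_simps)
  show "hm m (r/z) \<le> 8^m * hm m (r/s0)" using h_compare[of "r/s0" "r/z" m] 1 2 assms z by simp
  show "hm m (r/s0) \<le> 8^m * hm m (r/z)" using h_compare[of "r/z" "r/s0" m] 1 2 assms z by simp
qed

lemma MV_Q:
  assumes "s0 > 0" "r > 0" "s0/2 \<le> s1" "s1 \<le> 2 * s0" "s0/2 \<le> s2" "s2 \<le> 2 * s0"
  shows "\<bar>Qm m (r/s1) - Qm m (r/s2)\<bar> \<le> \<bar>s1 - s2\<bar> * (2 * real m * 8^m / s0) * hm m (r/s0)"
proof -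
  have "\<exists>z. min s2 s1 \<le> z \<and> z \<le> max s2 s1 \<and>
      Qm m (r/s1) - Qm m (r/s2) = (s1 - s2) * (real m * hm m (r/z) / z)"
    by (rule mvt_exists[where f="\<lambda>\<sigma>. Qm m (r/\<sigma>)"], rule DQ_sigma) (use assms in auto)
  then obtain z where z: "min s2 s1 \<le> z" "z \<le> max s2 s1"
    and eq: "Qm m (r/s1) - Qm m (r/s2) = (s1 - s2) * (real m * hm m (r/z) / z)" by blast
  have zr: "s0/2 \<le> z" "z \<le> 2 * s0" using z assms by auto
  have zp: "z > 0" using zr assms by simp
  have hz: "0 \<le> hm m (r/z)" using h_nonneg[of "r/z" m] zp assms by simp
  have "real m * hm m (r/z) / z \<le> real m * (8^m * hm m (r/s0)) / (s0/2)"
    using range_compare(1)[OF assms(1,2) zr, of m] zr zp hz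
    by (intro frac_le mult_left_mono) auto
  also have "\<dots> = 2 * real m * 8^m / s0 * hm m (r/s0)" by simp
  finally have b: "real m * hm m (r/z) / z \<le> 2 * real m * 8^m / s0 * hm m (r/s0)" .
  have "\<bar>Qm m (r/s1) - Qm m (r/s2)\<bar> = \<bar>s1 - s2\<bar> * (real m * hm m (r/z) / z)"
    using eq hz zp by (simp add: abs_mult)
  also have "\<dots> \<le> \<bar>s1 - s2\<bar> * (2 * real m * 8^m / s0 * hm m (r/s0))"
    using b by (intro mult_left_mono) auto
  finally show ?thesis by (simp add: mult.assoc)
qed

lemma MV_h:
  assumes "s0 > 0" "r > 0" "s0/2 \<le> s1" "s1 \<le> 2 * s0" "s0/2 \<le> s2" "s2 \<le> 2 * s0"
  shows "\<bar>hm m (r/s1) - hm m (r/s2)\<bar> \<le> \<bar>s1 - s2\<bar> * (2 * real m * 8^m / s0) * hm m (r/s0)"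
proof -
  have "\<exists>z. min s2 s1 \<le> z \<and> z \<le> max s2 s1 \<and>
      hm m (r/s1) - hm m (r/s2) = (s1 - s2) * (cos (Qm m (r/z)) * (real m * hm m (r/z) / z))"
    by (rule mvt_exists[where f="\<lambda>\<sigma>. hm m (r/\<sigma>)"], rule Dh_sigma) (use assms in auto)
  then obtain z where z: "min s2 s1 \<le> z" "z \<le> max s2 s1"
    and eq: "hm m (r/s1) - hm m (r/s2) = (s1 - s2) * (cos (Qm m (r/z)) * (real m * hm m (r/z) / z))" by blast
  have zr: "s0/2 \<le> z" "z \<le> 2 * s0" using z assms by auto
  have zp: "z > 0" using zr assms by simp
  have hz: "0 \<le> hm m (r/z)" using h_nonneg[of "r/z" m] zp assms by simp
  have "real m * hm m (r/z) / z \<le> real m * (8^m * hm m (r/s0)) / (s0/2)"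
    using range_compare(1)[OF assms(1,2) zr, of m] zr zp hz
    by (intro frac_le mult_left_mono) auto
  also have "\<dots> = 2 * real m * 8^m / s0 * hm m (r/s0)" by simp
  finally have b: "real m * hm m (r/z) / z \<le> 2 * real m * 8^m / s0 * hm m (r/s0)" .
  have Y0: "0 \<le> real m * hm m (r/z) / z" using hz zp by simp
  have "\<bar>cos (Qm m (r/z))\<bar> * (real m * hm m (r/z) / z) \<le> real m * hm m (r/z) / z"
    by (rule mult_left_le_one_le) (use Y0 abs_cos_le_one in auto)
  moreover have "\<bar>cos (Qm m (r/z)) * (real m * hm m (r/z) / z)\<bar> =
     \<bar>cos (Qm m (r/z))\<bar> * (real m * hm m (r/z) / z)"
    by (simp only: abs_mult[of "cos (Qm m (r/z))" "real m * hm m (r/z) / z"] abs_of_nonneg[OF Y0])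
  ultimately have c: "\<bar>cos (Qm m (r/z)) * (real m * hm m (r/z) / z)\<bar> \<le> real m * hm m (r/z) / z"
    by simp
  have "\<bar>hm m (r/s1) - hm m (r/s2)\<bar> = \<bar>s1 - s2\<bar> * \<bar>cos (Qm m (r/z)) * (real m * hm m (r/z) / z)\<bar>"
    using eq by (simp add: abs_mult)
  also have "\<dots> \<le> \<bar>s1 - s2\<bar> * (2 * real m * 8^m / s0 * hm m (r/s0))"
    using b c by (intro mult_left_mono) auto
  finally show ?thesis by (simp add: mult.assoc)
qed

lemma MV_G:
  assumes "s0 > 0" "r > 0" "s0/2 \<le> s" "s \<le> 2 * s0"
  shows "(s - s0) * (Qm m (r/s) - Qm m (r/s0)) \<ge> (s - s0)^2 * (real m / (2 * s0 * 8^m)) * hm m (r/s0)"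
proof -
  have "\<exists>z. min s0 s \<le> z \<and> z \<le> max s0 s \<and>
      Qm m (r/s) - Qm m (r/s0) = (s - s0) * (real m * hm m (r/z) / z)"
    by (rule mvt_exists[where f="\<lambda>\<sigma>. Qm m (r/\<sigma>)"], rule DQ_sigma) (use assms in auto)
  then obtain z where z: "min s0 s \<le> z" "z \<le> max s0 s"
    and eq: "Qm m (r/s) - Qm m (r/s0) = (s - s0) * (real m * hm m (r/z) / z)" by blast
  have zr: "s0/2 \<le> z" "z \<le> 2 * s0" using z assms by auto
  have zp: "z > 0" using zr assms by simp
  have h0: "0 \<le> hm m (r/s0)" using h_nonneg[of "r/s0" m] assms by simp
  have p8: "(0::real) < 8^m" by simp
  have hz: "0 \<le> hm m (r/z)" using h_nonneg[of "r/z" m] zp assms by simp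
  have "real m * (hm m (r/s0) / 8^m) / (2 * s0) \<le> real m * hm m (r/z) / z"
    using range_compare(2)[OF assms(1,2) zr, of m] zr zp h0 p8 hz
    by (intro frac_le mult_left_mono) (auto simp: field_simps)
  then have b: "real m / (2 * s0 * 8^m) * hm m (r/s0) \<le> real m * hm m (r/z) / z"
    by (simp add: field_simps)
  have "(s - s0) * (Qm m (r/s) - Qm m (r/s0)) = (s - s0)^2 * (real m * hm m (r/z) / z)"
    using eq by (simp add: power2_eq_square)
  also have "\<dots> \<ge> (s - s0)^2 * (real m / (2 * s0 * 8^m) * hm m (r/s0))"
    using b by (intro mult_left_mono) auto
  finally show ?thesis by (simp add: mult.assoc)
qed


lemma gg_int: assumes "s > 0"
  shows "integrable lborel (\<lambda>r. gg (r/s))" "(\<integral>r. gg (r/s) \<partial>lborel) = s * pi"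
proof -
  have i: "integrable lborel (\<lambda>x::real. inverse (1 + x^2))"
    using integrable_inverse_1_plus_square by (simp add: set_integrable_def)
  have v: "(\<integral>x. inverse (1 + (x::real)^2) \<partial>lborel) = pi"
    using LBINT_inverse_1_plus_square
    by (simp add: interval_lebesgue_integral_def set_lebesgue_integral_def)
  have "integrable lborel (\<lambda>x. inverse (1 + (0 + (1/s) * x)^2))"
    using lborel_integrable_real_affine[OF i, of "1/s" 0] assms by simp
  then show "integrable lborel (\<lambda>r. gg (r/s))" by (simp add: gg_def)
  have "(\<integral>x. inverse (1 + x^2) \<partial>lborel) = \<bar>1/s\<bar> *\<^sub>R (\<integral>x. inverse (1 + (0 + (1/s) * x)^2) \<partial>lborel)"
    using lborel_integral_real_affine[of "1/s" "\<lambda>x. inverse (1 + x^2)" 0] assms by simp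
  then show "(\<integral>r. gg (r/s) \<partial>lborel) = s * pi" using v assms by (simp add: gg_def field_simps)
qed

lemma cont_meas:
  fixes f :: "real \<Rightarrow> real"
  assumes "continuous_on {0<..} f"
  shows "(\<lambda>r. indicator {0<..} r * f r) \<in> borel_measurable borel"
  using borel_measurable_continuous_on_indicator[of "{0<..}" f] assms by simp

lemma dom_set_int:
  fixes f :: "real \<Rightarrow> real"
  assumes s: "s > 0" and meas: "(\<lambda>r. indicator {0<..} r * f r) \<in> borel_measurable borel"
    and bnd: "\<And>r. r > 0 \<Longrightarrow> \<bar>f r\<bar> \<le> K * gg (r/s)"
  shows "set_integrable lborel {0<..} f" "\<bar>LINT r:{0<..}|lborel. f r\<bar> \<le> K * s * pi"
proof -
  have gi: "integrable lborel (\<lambda>r. K * gg (r/s))" using gg_int(1)[OF s] by simp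
  have ii: "integrable lborel (\<lambda>r. indicator {0<..} r * f r)"
  proof (rule Bochner_Integration.integrable_bound[OF gi])
    show "(\<lambda>r. indicator {0<..} r * f r) \<in> borel_measurable lborel" using meas by simp
    show "AE x in lborel. norm (indicator {0<..} x * f x) \<le> norm (K * gg (x/s))"
    proof (intro AE_I2)
      fix x :: real
      show "norm (indicator {0<..} x * f x) \<le> norm (K * gg (x/s))"
      proof (cases "x > 0")
        case True then show ?thesis using bnd[of x] by (simp add: indicator_def)
      next
        case False then show ?thesis by (simp add: indicator_def)
      qed
    qed
  qed
  then show si: "set_integrable lborel {0<..} f" by (simp add: set_integrable_def)
  have "\<bar>\<integral>r. indicator {0<..} r * f r \<partial>lborel\<bar> \<le> (\<integral>r. K * gg (r/s) \<partial>lborel)"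
  proof (rule Bochner_Integration.integral_abs_bound_integral[OF ii gi])
    fix x :: real
    show "\<bar>indicator {0<..} x * f x\<bar> \<le> K * gg (x/s)"
    proof (cases "x > 0")
      case True then show ?thesis using bnd[of x] by (simp add: indicator_def)
    next
      case False
      have "0 \<le> K * gg (x/s)" using bnd[of 1] s gg_pos[of "1/s"] gg_pos[of "x/s"]
        by (smt (verit) zero_le_mult_iff)
      then show ?thesis using False by (simp add: indicator_def)
    qed
  qed
  then show "\<bar>LINT r:{0<..}|lborel. f r\<bar> \<le> K * s * pi"
    using gg_int(2)[OF s] by (simp add: set_lebesgue_integral_def)
qed

lemma lower_int:
  fixes f :: "real \<Rightarrow> real"
  assumes si: "set_integrable lborel {0<..} f" and ab: "0 < a" "a \<le> b"
    and pos: "\<And>r. r > 0 \<Longrightarrow> f r \<ge> 0" and lo: "\<And>r. a \<le> r \<Longrightarrow> r \<le> b \<Longrightarrow> f r \<ge> c"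
    and c: "c \<ge> 0"
  shows "(LINT r:{0<..}|lborel. f r) \<ge> c * (b - a)"
proof -
  have ii: "integrable lborel (\<lambda>r. c * indicator {a..b} r)"
    by (intro integrable_mult_right integrable_real_indicator) (auto simp: emeasure_lborel_Icc_eq)
  have "(\<integral>r. c * indicator {a..b} r \<partial>lborel) \<le> (\<integral>r. indicator {0<..} r * f r \<partial>lborel)"
  proof (rule Bochner_Integration.integral_mono[OF ii])
    show "integrable lborel (\<lambda>r. indicator {0<..} r * f r)" using si by (simp add: set_integrable_def)
    fix x :: real
    show "c * indicator {a..b} x \<le> indicator {0<..} x * f x"
      using pos[of x] lo[of x] ab c by (auto simp: indicator_def)
  qed
  moreover have "(\<integral>r. c * indicator {a..b} r \<partial>lborel) = c * (b - a)"
    using ab by simp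
  ultimately show ?thesis using ab by (simp add: set_lebesgue_integral_def)
qed


lemma interval_choice:
  fixes x :: real assumes "x > 0"
  obtains n :: nat where "1 / real (Suc n) < x" "x < real (Suc n)"
proof -
  obtain n :: nat where n: "max x (1/x) < real n" using reals_Archimedean2 by blast
  have "x < real (Suc n)" using n by simp
  moreover have "1 / real (Suc n) < x"
  proof -
    have "1/x < real (Suc n)" using n by simp
    then show ?thesis using assms by (simp add: field_simps)
  qed
  ultimately show ?thesis using that by blast
qed

lemma interval_eventually:
  fixes x :: real assumes "x > 0"
  shows "eventually (\<lambda>n. 1 / real (Suc n) < x \<and> x < real (Suc n)) sequentially"
proof -
  obtain N :: nat where N: "1 / real (Suc N) < x" "x < real (Suc N)" using interval_choice[OF assms] by blast
  show ?thesis unfolding eventually_sequentially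
  proof (intro exI allI impI)
    fix n assume "N \<le> n"
    then have le: "real (Suc N) \<le> real (Suc n)" by simp
    have "1 / real (Suc n) \<le> 1 / real (Suc N)" using le by (intro divide_left_mono) auto
    then show "1 / real (Suc n) < x \<and> x < real (Suc n)" using N le by linarith
  qed
qed

lemma X2D_cont:
  assumes "X2_deriv m w w'"
  shows "continuous_on {0<..} w"
proof (rule continuous_at_imp_continuous_on, intro ballI)
  fix x :: real assume "x \<in> {0<..}"
  then have x: "x > 0" by simp
  define a where "a = x/2"
  define b where "b = 2 * x"
  have ab: "0 < a" "a \<le> b" using x by (auto simp: a_def b_def)
  have si: "set_integrable lborel {a..b} w'" using assms ab by (simp add: X2_deriv_def)
  have io: "w' integrable_on {a..b}" using set_borel_integral_eq_integral(1)[OF si] .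
  have eq: "w y = w a + integral {a..y} w'" if "y \<in> {a..b}" for y
  proof -
    have siy: "set_integrable lborel {a..y} w'" using assms ab that by (simp add: X2_deriv_def)
    have "w y - w a = (LINT r:{a..y}|lborel. w' r)" using assms ab that by (simp add: X2_deriv_def)
    also have "\<dots> = integral {a..y} w'" using set_borel_integral_eq_integral(2)[OF siy] .
    finally show ?thesis by simp
  qed
  have "continuous_on {a..b} (\<lambda>y. w a + integral {a..y} w')"
    by (intro continuous_intros indefinite_integral_continuous_1 io)
  then have "continuous_on {a..b} w"
  proof (rule continuous_on_eq)
    fix y assume y: "y \<in> {a..b}"
    show "w a + integral {a..y} w' = w y" using eq[OF y] by linarith
  qed
  moreover have "x \<in> interior {a..b}" using x by (simp add: a_def b_def)
  ultimately show "isCont w x" using continuous_on_interior by blast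
qed

lemma X2D_meas:
  assumes "X2_deriv m w w'"
  shows "(\<lambda>r. indicator {0<..} r * w' r) \<in> borel_measurable borel"
proof -
  define u where "u n r = indicator {1 / real (Suc n) .. real (Suc n)} r * w' r" for n r
  have "u n \<in> borel_measurable lborel" for n
  proof -
    have "1 / real (Suc n) \<le> real (Suc n)" by (simp add: field_simps)
    then have "set_integrable lborel {1 / real (Suc n) .. real (Suc n)} w'"
      using assms by (simp add: X2_deriv_def)
    then have "integrable lborel (u n)" by (simp add: set_integrable_def u_def[abs_def])
    then show ?thesis by (rule borel_measurable_integrable)
  qed
  then have um: "u n \<in> borel_measurable borel" for n by simp
  show ?thesis
  proof (rule borel_measurable_LIMSEQ_real[OF _ um])
    fix x :: real
    show "(\<lambda>i. u i x) \<longlonglongrightarrow> indicator {0<..} x * w' x"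
    proof (cases "x > 0")
      case True
      have "eventually (\<lambda>n. u n x = indicator {0<..} x * w' x) sequentially"
        using interval_eventually[OF True] by eventually_elim (use True in \<open>auto simp: u_def indicator_def\<close>)
      then show ?thesis by (rule tendsto_eventually)
    next
      case False
      have "u i x = 0" for i
      proof -
        have p: "1 / real (Suc i) > 0" by simp
        have "\<not> 1 / real (Suc i) \<le> x" using p False by linarith
        then have "x \<notin> {1 / real (Suc i) .. real (Suc i)}" by auto
        then show ?thesis by (simp add: u_def)
      qed
      then show ?thesis using False by (simp add: indicator_def)
    qed
  qed
qed

lemma X2D_unique:
  assumes d1: "X2_deriv m w d1" and d2: "X2_deriv m w d2"
  shows "AE x in lborel. x > 0 \<longrightarrow> d1 x = d2 x"
proof -
  define a where "a n = 1 / real (Suc n)" for n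
  define b where "b n = real (Suc n)" for n
  have ab: "0 < a n" "a n \<le> b n" for n by (auto simp: a_def b_def field_simps)
  define f where "f n x = (if x \<in> {a n..b n} then d1 x - d2 x else 0)" for n x
  have zero_int: "integral {y..z} (\<lambda>x. d1 x - d2 x) = 0" if "0 < y" "y \<le> z" for y z
  proof -
    have s1: "set_integrable lborel {y..z} d1" and e1: "w z - w y = (LINT r:{y..z}|lborel. d1 r)"
      using d1 that by (auto simp: X2_deriv_def)
    have s2: "set_integrable lborel {y..z} d2" and e2: "w z - w y = (LINT r:{y..z}|lborel. d2 r)"
      using d2 that by (auto simp: X2_deriv_def)
    have sd: "set_integrable lborel {y..z} (\<lambda>x. d1 x - d2 x)" using set_integral_diff(1)[OF s1 s2] .
    have "integral {y..z} (\<lambda>x. d1 x - d2 x) = (LINT r:{y..z}|lborel. d1 r - d2 r)"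
      using set_borel_integral_eq_integral(2)[OF sd] by simp
    also have "\<dots> = (LINT r:{y..z}|lborel. d1 r) - (LINT r:{y..z}|lborel. d2 r)"
      using set_integral_diff(2)[OF s1 s2] .
    finally show ?thesis using e1 e2 by simp
  qed
  have fint: "f n integrable_on cbox c e" for n c e
  proof -
    have s1: "set_integrable lborel {a n..b n} d1" using d1 ab[of n] by (simp add: X2_deriv_def)
    have s2: "set_integrable lborel {a n..b n} d2" using d2 ab[of n] by (simp add: X2_deriv_def)
    have sd: "set_integrable lborel {a n..b n} (\<lambda>x. d1 x - d2 x)" using set_integral_diff(1)[OF s1 s2] .
    have "(\<lambda>x. d1 x - d2 x) integrable_on {a n..b n}" using set_borel_integral_eq_integral(1)[OF sd] .
    then have "f n integrable_on UNIV"
      using Henstock_Kurzweil_Integration.integrable_restrict_UNIV[of "{a n..b n}" "\<lambda>x. d1 x - d2 x"]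
      by (simp add: f_def[abs_def])
    then show ?thesis by (rule integrable_on_subcbox) auto
  qed
  have ex: "\<exists>N. negligible N \<and> (\<forall>x. x \<notin> N \<longrightarrow> a n < x \<longrightarrow> x < b n \<longrightarrow> d1 x = d2 x)" for n
  proof -
    obtain N where negN: "negligible N" and NP: "\<And>x e. \<lbrakk>x \<notin> N; 0 < e\<rbrakk> \<Longrightarrow>
               \<exists>d>0. \<forall>h. 0 < h \<and> h < d \<longrightarrow>
                         norm(integral (cbox x (x + h *\<^sub>R One)) (f n) /\<^sub>R h ^ DIM(real) - f n x) < e"
      by (rule integrable_ccontinuous_explicit[of "f n", OF fint]) (rule that; assumption)
    have "d1 x = d2 x" if x: "x \<notin> N" "a n < x" "x < b n" for x
    proof (rule ccontr)
      assume ne: "d1 x \<noteq> d2 x"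
      have fx: "f n x = d1 x - d2 x" using x by (simp add: f_def)
      then have epos: "0 < \<bar>f n x\<bar>" using ne by simp
      obtain d where d: "d > 0" and dP: "\<forall>h. 0 < h \<and> h < d \<longrightarrow>
           norm(integral (cbox x (x + h *\<^sub>R One)) (f n) /\<^sub>R h ^ DIM(real) - f n x) < \<bar>f n x\<bar>"
        using NP[OF x(1) epos] by blast
      define h where "h = min (d/2) ((b n - x)/2)"
      have "h \<le> (b n - x)/2" "h \<le> d/2" unfolding h_def by (rule min.cobounded2, rule min.cobounded1)
      then have h: "0 < h" "h < d" "x + h < b n" using d x by (auto simp: h_def)
      have "integral {x..x+h} (f n) = integral {x..x+h} (\<lambda>x. d1 x - d2 x)"
      proof (rule integral_cong)
        fix y assume "y \<in> {x..x+h}"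
        then have "y \<in> {a n..b n}" using x h by auto
        then show "f n y = d1 y - d2 y" by (simp add: f_def)
      qed
      also have "\<dots> = 0"
      proof (rule zero_int)
        show "0 < x" using x ab[of n] by linarith
        show "x \<le> x + h" using h by linarith
      qed
      finally have i0: "integral {x..x+h} (f n) = 0" .
      have cb: "cbox x (x + h *\<^sub>R One) = {x..x+h}" by simp
      have "integral (cbox x (x + h *\<^sub>R One)) (f n) = 0" unfolding cb by (rule i0)
      then have e1: "norm(integral (cbox x (x + h *\<^sub>R One)) (f n) /\<^sub>R h ^ DIM(real) - f n x) = \<bar>f n x\<bar>"
        by simp
      have "norm(integral (cbox x (x + h *\<^sub>R One)) (f n) /\<^sub>R h ^ DIM(real) - f n x) < \<bar>f n x\<bar>"
        using dP h(1,2) by blast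
      then show False unfolding e1 by simp
    qed
    then show ?thesis using negN by blast
  qed
  then have "\<forall>n. \<exists>N. negligible N \<and> (\<forall>x. x \<notin> N \<longrightarrow> a n < x \<longrightarrow> x < b n \<longrightarrow> d1 x = d2 x)" by blast
  from choice[OF this] obtain N where NN: "\<forall>n. negligible (N n) \<and> (\<forall>x. x \<notin> N n \<longrightarrow> a n < x \<longrightarrow> x < b n \<longrightarrow> d1 x = d2 x)"
    by blast
  have negN: "\<And>n. negligible (N n)" using NN by blast
  have NP: "\<And>n x. x \<notin> N n \<Longrightarrow> a n < x \<Longrightarrow> x < b n \<Longrightarrow> d1 x = d2 x" using NN by blast
  have "AE x in lebesgue. \<forall>n. x \<notin> N n"
    unfolding AE_all_countable
  proof
    fix n
    have "N n \<in> null_sets lebesgue" using negN[of n] by (simp add: negligible_iff_null_sets)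
    then show "AE x in lebesgue. x \<notin> N n" by (rule AE_not_in)
  qed
  then have "AE x in lebesgue. x > 0 \<longrightarrow> d1 x = d2 x"
  proof (rule AE_mp, intro AE_I2 impI)
    fix x :: real assume "\<forall>n. x \<notin> N n" "x > 0"
    moreover obtain n where "1 / real (Suc n) < x" "x < real (Suc n)" using interval_choice[OF \<open>x > 0\<close>] by blast
    ultimately show "d1 x = d2 x" using NP[of x n] by (simp add: a_def b_def)
  qed
  then show ?thesis by (simp add: AE_completion_iff)
qed

lemma X2_norm_eq:
  assumes d: "X2_deriv m w w'"
  shows "X2_norm m w = sqrt (LINT r:{0<..}|lborel. ((w' r)^2 + (real m)^2 * (w r)^2 / r^2) * r)"
proof -
  define d where "d = (SOME w'. X2_deriv m w w')"
  have dd: "X2_deriv m w d" unfolding d_def by (rule someI[of "X2_deriv m w" w', OF d])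
  have ae: "AE x in lborel. x > 0 \<longrightarrow> d x = w' x" using X2D_unique[OF dd d] .
  have i1: "set_integrable lborel {0<..} (\<lambda>r. ((d r)^2 + (real m)^2 * (w r)^2 / r^2) * r)"
    using dd by (simp add: X2_deriv_def)
  have i2: "set_integrable lborel {0<..} (\<lambda>r. ((w' r)^2 + (real m)^2 * (w r)^2 / r^2) * r)"
    using d by (simp add: X2_deriv_def)
  have "(LINT r:{0<..}|lborel. ((d r)^2 + (real m)^2 * (w r)^2 / r^2) * r) =
        (LINT r:{0<..}|lborel. ((w' r)^2 + (real m)^2 * (w r)^2 / r^2) * r)"
    unfolding set_lebesgue_integral_def
  proof (rule integral_cong_AE)
    show "(\<lambda>x. indicator {0<..} x *\<^sub>R (((d x)^2 + (real m)^2 * (w x)^2 / x^2) * x)) \<in> borel_measurable lborel"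
      using i1 by (simp add: set_integrable_def borel_measurable_integrable)
    show "(\<lambda>x. indicator {0<..} x *\<^sub>R (((w' x)^2 + (real m)^2 * (w x)^2 / x^2) * x)) \<in> borel_measurable lborel"
      using i2 by (simp add: set_integrable_def borel_measurable_integrable)
    show "AE x in lborel. indicator {0<..} x *\<^sub>R (((d x)^2 + (real m)^2 * (w x)^2 / x^2) * x) =
        indicator {0<..} x *\<^sub>R (((w' x)^2 + (real m)^2 * (w x)^2 / x^2) * x)"
      using ae by eventually_elim (auto simp: indicator_def)
  qed
  then show ?thesis by (simp add: X2_norm_def d_def)
qed


lemma den_pos: "0 < 1 + (v::real)^(2*m)"
proof -
  have "0 \<le> (v^2)^m" by simp
  then show ?thesis by (simp add: power_mult add_pos_nonneg)
qed

lemma den_ne: "1 + (v::real)^(2*m) \<noteq> 0"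
  using den_pos[of v m] by linarith

lemma hm_cont: "s \<noteq> 0 \<Longrightarrow> continuous_on S (\<lambda>r. hm m (r/s))"
  unfolding hm_def by (intro continuous_intros) (auto simp: den_ne)

lemma Qm_cont: "s \<noteq> 0 \<Longrightarrow> continuous_on S (\<lambda>r. Qm m (r/s))"
  unfolding Qm_def by (intro continuous_intros) auto

lemma lambda_bound:
  fixes x a b :: real
  assumes a: "a \<ge> 0" and b: "b > 0" and H: "\<And>l. l > 0 \<Longrightarrow> x \<le> l * a + b / l"
  shows "x \<le> 2 * sqrt (a * b)"
proof (cases "a = 0")
  case True
  show ?thesis
  proof (rule ccontr)
    assume "\<not> ?thesis"
    then have x: "x > 0" using True by simp
    have "x \<le> 2 * b / x * a + b / (2 * b / x)" using H[of "2 * b / x"] x b by simp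
    also have "\<dots> = x / 2" using True x b by simp
    finally show False using x by simp
  qed
next
  case False
  then have ap: "a > 0" using a by simp
  define l where "l = sqrt (b / a)"
  have lp: "l > 0" using ap b by (simp add: l_def)
  have "x \<le> l * a + b / l" using H[OF lp] .
  also have "l * a = sqrt (a * b)"
  proof -
    have "l * a = sqrt (b/a) * sqrt (a^2)" using ap by (simp add: l_def)
    also have "\<dots> = sqrt (b/a * a^2)" by (simp only: real_sqrt_mult)
    also have "b/a * a^2 = a * b" using ap by (simp add: power2_eq_square)
    finally show ?thesis .
  qed
  also have "b / l = sqrt (a * b)"
  proof -
    have "b / l = sqrt (b^2) / sqrt (b/a)" using b by (simp add: l_def)
    also have "\<dots> = sqrt (b^2 / (b/a))" by (simp only: real_sqrt_divide)
    also have "b^2 / (b/a) = a * b" using ap b by (simp add: power2_eq_square)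
    finally show ?thesis .
  qed
  finally show ?thesis by simp
qed

lemma set_abs_bound:
  fixes f g :: "real \<Rightarrow> real"
  assumes "set_integrable lborel A f" "set_integrable lborel A g" "\<And>x. x \<in> A \<Longrightarrow> \<bar>f x\<bar> \<le> g x"
  shows "\<bar>LINT x:A|lborel. f x\<bar> \<le> (LINT x:A|lborel. g x)"
  unfolding set_lebesgue_integral_def
proof (rule Bochner_Integration.integral_abs_bound_integral)
  show "integrable lborel (\<lambda>x. indicator A x *\<^sub>R f x)" using assms(1) by (simp add: set_integrable_def)
  show "integrable lborel (\<lambda>x. indicator A x *\<^sub>R g x)" using assms(2) by (simp add: set_integrable_def)
  fix x :: real
  show "\<bar>indicator A x *\<^sub>R f x\<bar> \<le> indicator A x *\<^sub>R g x"
    using assms(3)[of x] by (auto simp: indicator_def)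
qed

lemma set_nonneg:
  fixes f :: "real \<Rightarrow> real"
  assumes "\<And>x. x \<in> A \<Longrightarrow> 0 \<le> f x"
  shows "0 \<le> (LINT x:A|lborel. f x)"
  unfolding set_lebesgue_integral_def
  by (rule Bochner_Integration.integral_nonneg) (use assms in \<open>auto simp: indicator_def\<close>)

lemma set_mono:
  fixes f g :: "real \<Rightarrow> real"
  assumes "set_integrable lborel A f" "set_integrable lborel A g" "\<And>x. x \<in> A \<Longrightarrow> f x \<le> g x"
  shows "(LINT x:A|lborel. f x) \<le> (LINT x:A|lborel. g x)"
  by (rule set_integral_mono[OF assms])

lemma set_int_bound:
  fixes f g :: "real \<Rightarrow> real"
  assumes "set_integrable lborel A g" "(\<lambda>x. indicator A x * f x) \<in> borel_measurable borel"
    "\<And>x. x \<in> A \<Longrightarrow> \<bar>f x\<bar> \<le> g x"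
  shows "set_integrable lborel A f"
proof -
  have "integrable lborel (\<lambda>x. indicator A x * f x)"
  proof (rule Bochner_Integration.integrable_bound)
    show "integrable lborel (\<lambda>x. indicator A x * g x)" using assms(1) by (simp add: set_integrable_def)
    show "(\<lambda>x. indicator A x * f x) \<in> borel_measurable lborel" using assms(2) by simp
    show "AE x in lborel. norm (indicator A x * f x) \<le> norm (indicator A x * g x)"
    proof (intro AE_I2)
      fix x :: real
      show "norm (indicator A x * f x) \<le> norm (indicator A x * g x)"
      proof (cases "x \<in> A")
        case True then show ?thesis using assms(3)[of x] by (simp add: indicator_def)
      next
        case False then show ?thesis by (simp add: indicator_def)
      qed
    qed
  qed
  then show ?thesis by (simp add: set_integrable_def)
qed


locale modctx =
  fixes m :: nat and s0 :: real and xi xi' :: "real \<Rightarrow> real"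
  assumes m4: "m \<ge> 4" and s0: "s0 > 0" and xd: "X2_deriv m xi xi'"
begin

definition Xf where "Xf r = ((xi' r)^2 + (real m)^2 * (xi r)^2 / r^2) * r"
definition Nsq where "Nsq = (LINT r:{0<..}|lborel. Xf r)"

lemma Xint: "set_integrable lborel {0<..} Xf"
  using xd by (simp add: X2_deriv_def Xf_def[abs_def])

lemma Xf_nonneg: "r > 0 \<Longrightarrow> Xf r \<ge> 0"
  by (simp add: Xf_def)

lemma Nsq_nonneg: "Nsq \<ge> 0"
  unfolding Nsq_def by (rule set_nonneg) (simp add: Xf_nonneg)

lemma xi_cont: "continuous_on {0<..} xi"
  by (rule X2D_cont[OF xd])

lemma xi_sq: assumes "r > 0" shows "(xi r)^2 / r \<le> Xf r"
proof -
  have m1: "(1::real) \<le> (real m)^2" using m4 by simp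
  have "(xi r)^2 / r \<le> (real m)^2 * (xi r)^2 / r"
    using m1 assms by (simp add: divide_right_mono mult_right_mono[of 1 "(real m)^2" "(xi r)^2", simplified])
  also have "\<dots> = (real m)^2 * (xi r)^2 / r^2 * r" using assms by (simp add: power2_eq_square)
  also have "\<dots> \<le> Xf r" unfolding Xf_def using assms by (simp add: distrib_right)
  finally show ?thesis .
qed

lemma h3_int: assumes s: "s > 0"
  shows "set_integrable lborel {0<..} (\<lambda>r. (hm m (r/s))^2 * r^3)"
    "(LINT r:{0<..}|lborel. (hm m (r/s))^2 * r^3) \<le> 8 * s^4 * pi"
proof -
  have meas: "(\<lambda>r. indicator {0<..} r * ((hm m (r/s))^2 * r^3)) \<in> borel_measurable borel"
    by (rule cont_meas) (intro continuous_intros hm_cont, use s in auto)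
  have bnd: "\<bar>(hm m (r/s))^2 * r^3\<bar> \<le> (8 * s^3) * gg (r/s)" if r: "r > 0" for r
  proof -
    have v: "r/s > 0" using r s by simp
    have "(hm m (r/s))^2 * r^3 = s^3 * ((hm m (r/s))^2 * (r/s)^3)" using s by (simp add: field_simps)
    also have "\<dots> \<le> s^3 * (8 * gg (r/s))" using P2[OF m4 v] s by (intro mult_left_mono) auto
    finally have "(hm m (r/s))^2 * r^3 \<le> s^3 * (8 * gg (r/s))" .
    moreover have "0 \<le> (hm m (r/s))^2 * r^3" using r by simp
    ultimately show ?thesis by (simp add: mult_ac)
  qed
  show "set_integrable lborel {0<..} (\<lambda>r. (hm m (r/s))^2 * r^3)" using dom_set_int(1)[OF s meas bnd] .
  have "\<bar>LINT r:{0<..}|lborel. (hm m (r/s))^2 * r^3\<bar> \<le> 8 * s^3 * s * pi" using dom_set_int(2)[OF s meas bnd] .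
  then show "(LINT r:{0<..}|lborel. (hm m (r/s))^2 * r^3) \<le> 8 * s^4 * pi"
    by (simp add: power_Suc power3_eq_cube power4_eq_xxxx mult_ac)
qed

lemma amgm_pt:
  fixes r l hh x :: real
  assumes r: "r > 0" and l: "l > 0" and hpos: "hh \<ge> 0"
  shows "\<bar>x * hh * r\<bar> \<le> l / 2 * (x^2 / r) + 1 / (2 * l) * (hh^2 * r^3)"
proof -
  have "0 \<le> (l * \<bar>x\<bar> - hh * r^2)^2" by simp
  then have "2 * l * \<bar>x\<bar> * hh * r^2 \<le> l^2 * x^2 + hh^2 * r^4"
    by (simp add: power2_eq_square algebra_simps power4_eq_xxxx)
  then have "(2 * l * \<bar>x\<bar> * hh * r^2) / (2 * l * r) \<le> (l^2 * x^2 + hh^2 * r^4) / (2 * l * r)"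
    using r l by (intro divide_right_mono) auto
  moreover have "(2 * l * \<bar>x\<bar> * hh * r^2) / (2 * l * r) = \<bar>x * hh * r\<bar>"
    using r l hpos by (simp add: abs_mult power2_eq_square)
  moreover have "(l^2 * x^2 + hh^2 * r^4) / (2 * l * r) = l / 2 * (x^2 / r) + 1 / (2 * l) * (hh^2 * r^3)"
    using r l by (simp add: field_simps power2_eq_square power3_eq_cube power4_eq_xxxx)
  ultimately show ?thesis by simp
qed

lemma P_int: assumes s: "s > 0"
  shows "set_integrable lborel {0<..} (\<lambda>r. xi r * hm m (r/s) * r)"
    "\<bar>LINT r:{0<..}|lborel. xi r * hm m (r/s) * r\<bar> \<le> 6 * s^2 * sqrt Nsq"
proof -
  have hint: "set_integrable lborel {0<..} (\<lambda>r. (hm m (r/s))^2 * r^3)" by (rule h3_int(1)[OF s])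
  have hle: "(LINT r:{0<..}|lborel. (hm m (r/s))^2 * r^3) \<le> 8 * s^4 * pi" by (rule h3_int(2)[OF s])
  have pt: "\<bar>xi r * hm m (r/s) * r\<bar> \<le> l / 2 * Xf r + 1 / (2 * l) * ((hm m (r/s))^2 * r^3)"
    if r: "r > 0" and l: "l > 0" for r l
  proof -
    have hp: "hm m (r/s) \<ge> 0" using h_nonneg[of "r/s" m] r s by simp
    have "\<bar>xi r * hm m (r/s) * r\<bar> \<le> l / 2 * ((xi r)^2 / r) + 1 / (2 * l) * ((hm m (r/s))^2 * r^3)"
      by (rule amgm_pt[OF r l hp])
    also have "\<dots> \<le> l / 2 * Xf r + 1 / (2 * l) * ((hm m (r/s))^2 * r^3)"
      using xi_sq[OF r] l by (intro add_right_mono mult_left_mono) auto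
    finally show ?thesis .
  qed
  have bint: "set_integrable lborel {0<..} (\<lambda>r. l / 2 * Xf r + 1 / (2 * l) * ((hm m (r/s))^2 * r^3))" for l
    using Xint hint by (intro set_integral_add(1) set_integrable_mult_right) auto
  have meas: "(\<lambda>r. indicator {0<..} r * (xi r * hm m (r/s) * r)) \<in> borel_measurable borel"
    by (rule cont_meas) (intro continuous_intros hm_cont xi_cont, use s in auto)
  show pint: "set_integrable lborel {0<..} (\<lambda>r. xi r * hm m (r/s) * r)"
  proof (rule set_int_bound[OF bint[of 1] meas])
    fix x :: real assume "x \<in> {0<..}"
    then show "\<bar>xi x * hm m (x/s) * x\<bar> \<le> 1 / 2 * Xf x + 1 / (2 * 1) * ((hm m (x/s))^2 * x^3)"
      using pt[of x 1] by simp
  qed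
  have "\<bar>LINT r:{0<..}|lborel. xi r * hm m (r/s) * r\<bar> \<le> l * (Nsq / 2) + (4 * pi * s^4) / l"
    if l: "l > 0" for l
  proof -
    have "\<bar>LINT r:{0<..}|lborel. xi r * hm m (r/s) * r\<bar> \<le>
        (LINT r:{0<..}|lborel. l / 2 * Xf r + 1 / (2 * l) * ((hm m (r/s))^2 * r^3))"
      by (rule set_abs_bound[OF pint bint]) (use pt l in auto)
    also have "\<dots> = l / 2 * Nsq + 1 / (2 * l) * (LINT r:{0<..}|lborel. (hm m (r/s))^2 * r^3)"
      using Xint hint by (simp add: set_integral_add(2) Nsq_def)
    also have "\<dots> \<le> l / 2 * Nsq + 1 / (2 * l) * (8 * s^4 * pi)"
      using hle l by (intro add_left_mono mult_left_mono) auto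
    also have "\<dots> = l * (Nsq / 2) + (4 * pi * s^4) / l" using l by (simp add: field_simps)
    finally show ?thesis .
  qed
  then have "\<bar>LINT r:{0<..}|lborel. xi r * hm m (r/s) * r\<bar> \<le> 2 * sqrt (Nsq / 2 * (4 * pi * s^4))"
    by (intro lambda_bound) (use Nsq_nonneg s in auto)
  also have "Nsq / 2 * (4 * pi * s^4) = (2 * pi) * Nsq * (s^2)^2" by (simp add: power_mult[symmetric])
  also have "sqrt \<dots> = sqrt (2 * pi) * sqrt Nsq * s^2"
  proof -
    have e: "sqrt ((s^2)^2) = s^2" by (rule real_sqrt_abs[THEN trans]) simp
    show ?thesis by (simp only: real_sqrt_mult e)
  qed
  also have "2 * (sqrt (2 * pi) * sqrt Nsq * s^2) \<le> 2 * (3 * sqrt Nsq * s^2)"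
  proof -
    have "sqrt (2 * pi) \<le> sqrt (3^2)" by (rule real_sqrt_le_mono) (use pi_less_4 in simp)
    moreover have "sqrt (3^2) = (3::real)" by (rule real_sqrt_abs[THEN trans]) simp
    ultimately have "sqrt (2 * pi) \<le> 3" by simp
    then show ?thesis using Nsq_nonneg by (intro mult_left_mono mult_right_mono) auto
  qed
  finally show "\<bar>LINT r:{0<..}|lborel. xi r * hm m (r/s) * r\<bar> \<le> 6 * s^2 * sqrt Nsq" by (simp add: mult_ac)
qed

end


context modctx
begin

definition Gf where "Gf s r = (Qm m (r/s0) - Qm m (r/s)) * hm m (r/s) * r"
definition G where "G s = (LINT r:{0<..}|lborel. Gf s r)"
definition P where "P s = (LINT r:{0<..}|lborel. xi r * hm m (r/s) * r)"
definition F where "F s = L2r_inner (\<lambda>r. xi r + Qs m s0 r - Qs m s r) (hs m s)"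

lemma Qdiff_dummy: "True" by simp

lemma Qdiff: "\<bar>Qm m a - Qm m b\<bar> \<le> 2 * pi"
  using Q_bounds[of m a] Q_bounds[of m b] by linarith

lemma hr_bound: assumes "s > 0" "r > 0" shows "hm m (r/s) * r \<le> 8 * s * gg (r/s)"
proof -
  have v: "r/s > 0" using assms by simp
  have "hm m (r/s) * r = s * (hm m (r/s) * (r/s))" using assms by simp
  also have "\<dots> \<le> s * (8 * gg (r/s))" using P3[OF m4 v] assms by (intro mult_left_mono) auto
  finally show ?thesis by simp
qed

lemma h0r_int: assumes s: "s > 0"
  shows "set_integrable lborel {0<..} (\<lambda>r. hm m (r/s) * r)"
proof -
  have meas: "(\<lambda>r. indicator {0<..} r * (hm m (r/s) * r)) \<in> borel_measurable borel"
    by (rule cont_meas) (intro continuous_intros hm_cont, use s in auto)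
  show ?thesis
  proof (rule dom_set_int(1)[OF s meas])
    fix r :: real assume r: "r > 0"
    have "0 \<le> hm m (r/s)" using h_nonneg[of "r/s" m] r s by simp
    then show "\<bar>hm m (r/s) * r\<bar> \<le> 8 * s * gg (r/s)" using hr_bound[OF s r] r by simp
  qed
qed

lemma h2r_int: assumes s: "s > 0"
  shows "set_integrable lborel {0<..} (\<lambda>r. (hm m (r/s))^2 * r)"
proof -
  have meas: "(\<lambda>r. indicator {0<..} r * ((hm m (r/s))^2 * r)) \<in> borel_measurable borel"
    by (rule cont_meas) (intro continuous_intros hm_cont, use s in auto)
  show ?thesis
  proof (rule dom_set_int(1)[OF s meas])
    fix r :: real assume r: "r > 0"
    have v: "r/s > 0" using r s by simp
    have "(hm m (r/s))^2 * r = s * ((hm m (r/s))^2 * (r/s))" using s by simp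
    also have "\<dots> \<le> s * (8 * gg (r/s))" using P4[OF m4 v] s by (intro mult_left_mono) auto
    finally show "\<bar>(hm m (r/s))^2 * r\<bar> \<le> 8 * s * gg (r/s)" using r by simp
  qed
qed

lemma G_int: assumes s: "s > 0" shows "set_integrable lborel {0<..} (Gf s)"
proof -
  have meas: "(\<lambda>r. indicator {0<..} r * Gf s r) \<in> borel_measurable borel"
    unfolding Gf_def by (rule cont_meas) (intro continuous_intros hm_cont Qm_cont, use s s0 in auto)
  show ?thesis
  proof (rule dom_set_int(1)[OF s meas])
    fix r :: real assume r: "r > 0"
    have hp: "0 \<le> hm m (r/s)" using h_nonneg[of "r/s" m] r s by simp
    have "\<bar>Gf s r\<bar> = \<bar>Qm m (r/s0) - Qm m (r/s)\<bar> * (hm m (r/s) * r)"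
      using hp r by (simp add: Gf_def abs_mult)
    also have "\<dots> \<le> (2 * pi) * (8 * s * gg (r/s))"
      by (rule mult_mono[OF Qdiff hr_bound[OF s r]]) (use hp r in auto)
    finally show "\<bar>Gf s r\<bar> \<le> 16 * pi * s * gg (r/s)" by simp
  qed
qed

lemma Phi_eq: "(xi r + Qs m s0 r - Qs m s r) * hs m s r * r = xi r * hm m (r/s) * r + Gf s r"
  by (simp add: Qs_def hs_def Gf_def algebra_simps)

lemma F_split: assumes s: "s > 0" shows "F s = P s + G s"
  and "set_integrable lborel {0<..} (\<lambda>r. (xi r + Qs m s0 r - Qs m s r) * hs m s r * r)"
proof -
  show "set_integrable lborel {0<..} (\<lambda>r. (xi r + Qs m s0 r - Qs m s r) * hs m s r * r)"
    unfolding Phi_eq using P_int(1)[OF s] G_int[OF s] by (rule set_integral_add(1))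
  show "F s = P s + G s"
    unfolding F_def L2r_inner_def Phi_eq P_def G_def
    using P_int(1)[OF s] G_int[OF s] by (rule set_integral_add(2))
qed

definition cG where "cG = real m / (8 * 256^m)"

lemma cG_pos: "cG > 0" using m4 by (simp add: cG_def)

lemma h2r_lower: "(LINT r:{0<..}|lborel. (hm m (r/s0))^2 * r) \<ge> (1/4)^m * (s0/2) * (s0 - s0/2)"
proof (rule lower_int[OF h2r_int[OF s0]])
  show "0 < s0/2" "s0/2 \<le> s0" using s0 by auto
  show "0 \<le> (1/4)^m * (s0/2)" using s0 by simp
  fix r :: real
  show "r > 0 \<Longrightarrow> 0 \<le> (hm m (r/s0))^2 * r" by simp
  assume r: "s0/2 \<le> r" "r \<le> s0"
  have v: "1/2 \<le> r/s0" "r/s0 \<le> 1" using r s0 by (auto simp: field_simps)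
  have "(1/2)^m \<le> hm m (r/s0)" using h_lower[OF v] .
  then have "((1/2)^m)^2 \<le> (hm m (r/s0))^2" by (intro power_mono) auto
  moreover have "((1/2::real)^m)^2 = (1/4)^m"
    by (simp add: power2_eq_square power_mult_distrib[symmetric])
  ultimately have a: "(1/4)^m \<le> (hm m (r/s0))^2" by simp
  show "(1/4)^m * (s0/2) \<le> (hm m (r/s0))^2 * r"
    using a r s0 by (intro mult_mono) auto
qed

lemma G_sign:
  assumes s: "s0/2 \<le> s" "s \<le> 2 * s0"
  shows "- (s - s0) * G s \<ge> cG * s0 * (s - s0)^2"
proof -
  have sp: "s > 0" using s s0 by simp
  define c1 where "c1 = (s - s0)^2 * (real m / (2 * s0 * 64^m))"
  have c1: "c1 \<ge> 0" using s0 by (simp add: c1_def)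
  have pt: "c1 * ((hm m (r/s0))^2 * r) \<le> - (s - s0) * Gf s r" if r: "r \<in> {0<..}" for r
  proof -
    have r0: "r > 0" using r by simp
    have h0: "0 \<le> hm m (r/s0)" using h_nonneg[of "r/s0" m] r0 s0 by simp
    have hs: "0 \<le> hm m (r/s)" using h_nonneg[of "r/s" m] r0 sp by simp
    have mv: "(s - s0)^2 * (real m / (2 * s0 * 8^m)) * hm m (r/s0) \<le> (s - s0) * (Qm m (r/s) - Qm m (r/s0))"
      by (rule MV_G[OF s0 r0 s])
    have cmp: "hm m (r/s0) / 8^m \<le> hm m (r/s)"
      using range_compare(2)[OF s0 r0 s, of m] by (simp add: field_simps)
    have "c1 * ((hm m (r/s0))^2 * r) = ((s - s0)^2 * (real m / (2 * s0 * 8^m)) * hm m (r/s0)) * (hm m (r/s0) / 8^m) * r"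
    proof -
      have e: "(64::real)^m = 8^m * 8^m" by (simp add: power_mult_distrib[symmetric])
      have aux: "X * (M / (2 * s0 * (A * A))) * (H * H * r) = X * (M / (2 * s0 * A)) * H * (H / A) * r"
        if "A > 0" for X M A H :: real
        using that s0 by (simp add: field_simps)
      show ?thesis unfolding c1_def e power2_eq_square[of "hm m (r/s0)"] by (rule aux) simp
    qed
    also have "\<dots> \<le> ((s - s0) * (Qm m (r/s) - Qm m (r/s0))) * hm m (r/s) * r"
    proof (rule mult_right_mono[OF mult_mono[OF mv cmp]])
      have "0 \<le> (s - s0)^2 * (real m / (2 * s0 * 8^m)) * hm m (r/s0)" using h0 s0 by simp
      then show "0 \<le> (s - s0) * (Qm m (r/s) - Qm m (r/s0))" using mv by linarith
      show "0 \<le> hm m (r/s0) / 8^m" using h0 by simp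
      show "0 \<le> r" using r0 by simp
    qed
    also have "\<dots> = - (s - s0) * Gf s r" by (simp add: Gf_def algebra_simps)
    finally show ?thesis .
  qed
  have "c1 * (LINT r:{0<..}|lborel. (hm m (r/s0))^2 * r) = (LINT r:{0<..}|lborel. c1 * ((hm m (r/s0))^2 * r))"
    by simp
  also have "\<dots> \<le> (LINT r:{0<..}|lborel. - (s - s0) * Gf s r)"
  proof (rule set_mono)
    show "set_integrable lborel {0<..} (\<lambda>r. c1 * ((hm m (r/s0))^2 * r))"
      by (rule set_integrable_mult_right) (rule h2r_int[OF s0])
    show "set_integrable lborel {0<..} (\<lambda>r. - (s - s0) * Gf s r)"
      by (rule set_integrable_mult_right) (rule G_int[OF sp])
  qed (rule pt)
  also have "\<dots> = - (s - s0) * G s" by (simp add: G_def)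
  finally have A: "c1 * (LINT r:{0<..}|lborel. (hm m (r/s0))^2 * r) \<le> - (s - s0) * G s" .
  have "c1 * ((1/4)^m * (s0/2) * (s0 - s0/2)) \<le> c1 * (LINT r:{0<..}|lborel. (hm m (r/s0))^2 * r)"
    using h2r_lower c1 by (rule mult_left_mono)
  moreover have "c1 * ((1/4)^m * (s0/2) * (s0 - s0/2)) = cG * s0 * (s - s0)^2"
  proof -
    have e1: "(1/4::real)^m = 1 / 4^m" by (simp add: power_one_over)
    have e2: "(256::real)^m = 64^m * 4^m" by (simp add: power_mult_distrib[symmetric])
    have aux: "X * (M / (2 * s0 * A)) * (1 / B * (s0/2) * (s0 - s0/2)) = M / (8 * (A * B)) * s0 * X"
      if "A > 0" "B > 0" for X M A B :: real
      using that s0 by (simp add: field_simps)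
    show ?thesis unfolding c1_def cG_def e1 e2 by (rule aux) auto
  qed
  ultimately show ?thesis using A by linarith
qed

end


lemma lip_arith:
  fixes a dh dq h2 x e r :: real
  assumes "\<bar>a\<bar> \<le> x + 2 * pi" "x \<ge> 0" "\<bar>dh\<bar> \<le> e" "\<bar>dq\<bar> \<le> e" "0 \<le> h2" "h2 \<le> 1" "r > 0"
  shows "\<bar>(a * dh - dq * h2) * r\<bar> \<le> (x + 2 * pi + 1) * e * r"
proof -
  have e0: "e \<ge> 0" using assms(3) by linarith
  have 1: "\<bar>a * dh\<bar> \<le> (x + 2 * pi) * e"
    unfolding abs_mult by (rule mult_mono) (use assms e0 in auto)
  have 2: "\<bar>dq * h2\<bar> \<le> e * 1"
    unfolding abs_mult by (rule mult_mono) (use assms e0 in auto)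
  have "\<bar>a * dh - dq * h2\<bar> \<le> (x + 2 * pi + 1) * e"
    using abs_triangle_ineq4[of "a * dh" "dq * h2"] 1 2 by (simp add: algebra_simps)
  then have "\<bar>a * dh - dq * h2\<bar> * r \<le> (x + 2 * pi + 1) * e * r" using assms(7) by (intro mult_right_mono) auto
  then show ?thesis using assms(7) by (simp add: abs_mult)
qed

context modctx
begin

definition Phi where "Phi s r = (xi r + Qs m s0 r - Qs m s r) * hs m s r * r"
definition Bf where "Bf r = (\<bar>xi r\<bar> + 2 * pi + 1) * hm m (r/s0) * r"
definition LF where "LF = (2 * real m * 8^m / s0) * (LINT r:{0<..}|lborel. Bf r)"

lemma F_Phi: "F s = (LINT r:{0<..}|lborel. Phi s r)"
  by (simp add: F_def L2r_inner_def Phi_def[abs_def])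

lemma Bf_int: "set_integrable lborel {0<..} Bf"
proof -
  have a: "set_integrable lborel {0<..} (\<lambda>r. \<bar>xi r * hm m (r/s0) * r\<bar>)"
    using P_int(1)[OF s0] by (rule set_integrable_abs)
  have b: "set_integrable lborel {0<..} (\<lambda>r. (2 * pi + 1) * (hm m (r/s0) * r))"
    by (rule set_integrable_mult_right) (rule h0r_int[OF s0])
  have c: "set_integrable lborel {0<..} (\<lambda>r. \<bar>xi r * hm m (r/s0) * r\<bar> + (2 * pi + 1) * (hm m (r/s0) * r))"
    using a b by (rule set_integral_add(1))
  show ?thesis
  proof (rule set_integrable_cong[THEN iffD1, OF refl refl _ c])
    fix r :: real assume "r \<in> {0<..}"
    then have r: "r > 0" by simp
    have "0 \<le> hm m (r/s0)" using h_nonneg[of "r/s0" m] r s0 by simp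
    then show "\<bar>xi r * hm m (r/s0) * r\<bar> + (2 * pi + 1) * (hm m (r/s0) * r) = Bf r"
      using r by (simp add: Bf_def abs_mult algebra_simps)
  qed
qed

lemma LF_nonneg: "LF \<ge> 0"
proof -
  have "0 \<le> (LINT r:{0<..}|lborel. Bf r)"
  proof (rule set_nonneg)
    fix r :: real assume "r \<in> {0<..}"
    then have "0 \<le> hm m (r/s0)" "r > 0" using h_nonneg[of "r/s0" m] s0 by auto
    then show "0 \<le> Bf r" by (simp add: Bf_def)
  qed
  then show ?thesis using s0 by (simp add: LF_def)
qed

lemma F_lip:
  assumes s1: "s0/2 \<le> s1" "s1 \<le> 2 * s0" and s2: "s0/2 \<le> s2" "s2 \<le> 2 * s0"
  shows "\<bar>F s1 - F s2\<bar> \<le> LF * \<bar>s1 - s2\<bar>"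
proof -
  have p1: "s1 > 0" and p2: "s2 > 0" using s1 s2 s0 by auto
  define D where "D = 2 * real m * 8^m / s0"
  have i1: "set_integrable lborel {0<..} (Phi s1)" using F_split(2)[OF p1] by (simp add: Phi_def[abs_def])
  have i2: "set_integrable lborel {0<..} (Phi s2)" using F_split(2)[OF p2] by (simp add: Phi_def[abs_def])
  have pt: "\<bar>Phi s1 r - Phi s2 r\<bar> \<le> (\<bar>s1 - s2\<bar> * D) * Bf r" if "r \<in> {0<..}" for r
  proof -
    have r: "r > 0" using that by simp
    have eq: "Phi s1 r - Phi s2 r = ((xi r + Qm m (r/s0) - Qm m (r/s1)) * (hm m (r/s1) - hm m (r/s2))
        - (Qm m (r/s1) - Qm m (r/s2)) * hm m (r/s2)) * r"
      by (simp add: Phi_def Qs_def hs_def algebra_simps)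
    have "\<bar>((xi r + Qm m (r/s0) - Qm m (r/s1)) * (hm m (r/s1) - hm m (r/s2))
        - (Qm m (r/s1) - Qm m (r/s2)) * hm m (r/s2)) * r\<bar> \<le> (\<bar>xi r\<bar> + 2 * pi + 1) * (\<bar>s1 - s2\<bar> * D * hm m (r/s0)) * r"
    proof (rule lip_arith)
      show "\<bar>xi r + Qm m (r/s0) - Qm m (r/s1)\<bar> \<le> \<bar>xi r\<bar> + 2 * pi"
        using Qdiff[of "r/s0" "r/s1"] by linarith
      show "\<bar>hm m (r/s1) - hm m (r/s2)\<bar> \<le> \<bar>s1 - s2\<bar> * D * hm m (r/s0)"
        unfolding D_def by (rule MV_h[OF s0 r s1 s2])
      show "\<bar>Qm m (r/s1) - Qm m (r/s2)\<bar> \<le> \<bar>s1 - s2\<bar> * D * hm m (r/s0)"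
        unfolding D_def by (rule MV_Q[OF s0 r s1 s2])
      show "0 \<le> hm m (r/s2)" using h_nonneg[of "r/s2" m] r p2 by simp
      show "hm m (r/s2) \<le> 1" by (rule h_le1)
    qed (use r in auto)
    then show ?thesis unfolding eq by (simp add: Bf_def mult_ac)
  qed
  have "\<bar>F s1 - F s2\<bar> = \<bar>LINT r:{0<..}|lborel. Phi s1 r - Phi s2 r\<bar>"
    unfolding F_Phi using set_integral_diff(2)[OF i1 i2] by simp
  also have "\<dots> \<le> (LINT r:{0<..}|lborel. (\<bar>s1 - s2\<bar> * D) * Bf r)"
  proof (rule set_abs_bound)
    show "set_integrable lborel {0<..} (\<lambda>r. Phi s1 r - Phi s2 r)" using set_integral_diff(1)[OF i1 i2] .
    show "set_integrable lborel {0<..} (\<lambda>r. (\<bar>s1 - s2\<bar> * D) * Bf r)"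
      by (rule set_integrable_mult_right) (rule Bf_int)
  qed (rule pt)
  also have "\<dots> = LF * \<bar>s1 - s2\<bar>" by (simp add: LF_def D_def mult_ac)
  finally show ?thesis .
qed

lemma F_cont: "continuous_on {s0/2 .. 2 * s0} F"
proof (rule lipschitz_on_continuous_on)
  show "LF-lipschitz_on {s0/2 .. 2 * s0} F"
    unfolding lipschitz_on_def using LF_nonneg F_lip by (auto simp: dist_real_def)
qed

end


context modctx
begin

definition Ef where "Ef s r = Qm m (r/s0) - Qm m (r/s)"
definition Ed where "Ed s r = - (real m * hm m (r/s0) / r) + real m * hm m (r/s) / r"
definition XE where "XE s r = ((Ed s r)^2 + (real m)^2 * (Ef s r)^2 / r^2) * r"
definition xt where "xt s r = xi r + Qs m s0 r - Qs m s r"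
definition xtd where "xtd s r = xi' r + Ed s r"
definition Xt where "Xt s r = ((xtd s r)^2 + (real m)^2 * (xt s r)^2 / r^2) * r"
definition KE where "KE = 64 * pi * (real m)^4 * 64^m"

lemma xt_eq: "xt s r = xi r + Ef s r" by (simp add: xt_def Ef_def Qs_def)

lemma E_deriv: assumes "r > 0" "s > 0" shows "(Ef s has_real_derivative Ed s r) (at r)"
proof -
  have "((\<lambda>r. Qm m (r/s0) - Qm m (r/s)) has_real_derivative
      (- (real m * hm m (r/s0) / r)) - (- (real m * hm m (r/s) / r))) (at r)"
    using assms s0 by (intro DERIV_diff DQ_r) auto
  then show ?thesis by (simp add: Ef_def[abs_def] Ed_def)
qed

lemma Ed_cont: assumes "s > 0" "0 \<notin> S" shows "continuous_on S (Ed s)"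
  unfolding Ed_def[abs_def] using assms s0
  by (intro continuous_intros hm_cont) auto

lemma Ef_cont: assumes "s > 0" shows "continuous_on S (Ef s)"
  unfolding Ef_def[abs_def] using assms s0
  by (intro continuous_intros Qm_cont) auto

lemma E_FTC: assumes s: "s > 0" and ab: "0 < a" "a \<le> b"
  shows "set_integrable lborel {a..b} (Ed s)" "Ef s b - Ef s a = (LINT r:{a..b}|lborel. Ed s r)"
proof -
  have c: "continuous_on {a..b} (Ed s)" by (rule Ed_cont) (use s ab in auto)
  show "set_integrable lborel {a..b} (Ed s)" by (rule borel_integrable_atLeastAtMost'[OF c])
  have "integral\<^sup>L lborel (\<lambda>x. indicator {a..b} x *\<^sub>R Ed s x) = Ef s b - Ef s a"
  proof (rule integral_FTC_atLeastAtMost[OF ab(2) _ c])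
    fix x assume "a \<le> x" "x \<le> b"
    then have "x > 0" using ab by simp
    then show "(Ef s has_vector_derivative Ed s x) (at x within {a..b})"
      using E_deriv[OF _ s] by (simp add: has_real_derivative_iff_has_vector_derivative[symmetric]
          has_field_derivative_at_within)
  qed
  then show "Ef s b - Ef s a = (LINT r:{a..b}|lborel. Ed s r)" by (simp add: set_lebesgue_integral_def)
qed

lemma XE_bound:
  assumes s: "s0/2 \<le> s" "s \<le> 2 * s0" and r: "r > 0"
  shows "\<bar>XE s r\<bar> \<le> (16 * (real m)^2 * (s - s0)^2 * (2 * real m * 8^m / s0)^2 / s0) * gg (r/s0)"
proof -
  define D where "D = 2 * real m * 8^m / s0"
  define c where "c = \<bar>s - s0\<bar> * D * hm m (r/s0)"
  have s00: "s0/2 \<le> s0" "s0 \<le> 2 * s0" using s0 by auto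
  have h0: "0 \<le> hm m (r/s0)" using h_nonneg[of "r/s0" m] r s0 by simp
  have D0: "D \<ge> 0" using s0 by (simp add: D_def)
  have c0: "c \<ge> 0" using h0 D0 by (simp add: c_def)
  have ef: "\<bar>Ef s r\<bar> \<le> c"
    using MV_Q[OF s0 r s00 s, of m] by (simp add: Ef_def c_def D_def abs_minus_commute)
  have hd: "\<bar>hm m (r/s) - hm m (r/s0)\<bar> \<le> c"
    using MV_h[OF s0 r s s00, of m] by (simp add: c_def D_def)
  have ed: "\<bar>Ed s r\<bar> \<le> real m * c / r"
  proof -
    have "Ed s r = real m / r * (hm m (r/s) - hm m (r/s0))" using r by (simp add: Ed_def field_simps)
    then have "\<bar>Ed s r\<bar> = real m / r * \<bar>hm m (r/s) - hm m (r/s0)\<bar>" using r by (simp add: abs_mult)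
    also have "\<dots> \<le> real m / r * c" using hd r by (intro mult_left_mono) auto
    finally show ?thesis by simp
  qed
  have ed2: "(Ed s r)^2 \<le> (real m * c / r)^2"
    using ed by (metis abs_ge_zero power2_abs power_mono)
  have ef2: "(Ef s r)^2 \<le> c^2"
    using ef by (metis abs_ge_zero power2_abs power_mono)
  have xe0: "XE s r \<ge> 0" using r by (simp add: XE_def)
  have "XE s r \<le> ((real m * c / r)^2 + (real m)^2 * c^2 / r^2) * r"
    unfolding XE_def using ed2 ef2 r
    by (intro mult_right_mono add_mono divide_right_mono mult_left_mono) auto
  also have "\<dots> = 2 * (real m)^2 * c^2 / r"
    using r by (simp add: field_simps power2_eq_square)
  also have "c^2 = (s - s0)^2 * D^2 * (hm m (r/s0))^2"
    by (simp add: c_def power_mult_distrib)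
  also have "2 * (real m)^2 * ((s - s0)^2 * D^2 * (hm m (r/s0))^2) / r = 2 * (real m)^2 * (s - s0)^2 * D^2 * ((hm m (r/s0))^2 / r)"
    by simp
  also have "\<dots> \<le> 2 * (real m)^2 * (s - s0)^2 * D^2 * ((1 / s0) * (8 * gg (r/s0)))"
  proof (rule mult_left_mono)
    have v: "r/s0 > 0" using r s0 by simp
    have "(hm m (r/s0))^2 / r = (1/s0) * ((hm m (r/s0))^2 / (r/s0))" using s0 r by simp
    also have "\<dots> \<le> (1/s0) * (8 * gg (r/s0))" using P1[OF m4 v] s0 by (intro mult_left_mono) auto
    finally show "(hm m (r/s0))^2 / r \<le> (1/s0) * (8 * gg (r/s0))" .
  qed simp
  also have "\<dots> = (16 * (real m)^2 * (s - s0)^2 * D^2 / s0) * gg (r/s0)" by simp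
  finally show ?thesis using xe0 by (simp add: D_def)
qed

lemma KE_eq: "(16 * (real m)^2 * (s - s0)^2 * (2 * real m * 8^m / s0)^2 / s0) * s0 * pi = KE * ((s - s0)/s0)^2"
proof -
  have e: "((8::real)^m)^2 = 64^m" by (simp add: power2_eq_square power_mult_distrib[symmetric])
  have aux: "(16 * M^2 * X * (2 * M * A / s0)^2 / s0) * s0 * pi = 64 * pi * M^4 * A^2 * (X / s0^2)"
    for M X A :: real using s0 by (simp add: field_simps power2_eq_square power4_eq_xxxx)
  show ?thesis unfolding KE_def aux e by (simp add: power_divide)
qed

lemma XE_int: assumes s: "s0/2 \<le> s" "s \<le> 2 * s0"
  shows "set_integrable lborel {0<..} (XE s)" "(LINT r:{0<..}|lborel. XE s r) \<le> KE * ((s - s0)/s0)^2"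
proof -
  have sp: "s > 0" using s s0 by simp
  have meas: "(\<lambda>r. indicator {0<..} r * XE s r) \<in> borel_measurable borel"
    unfolding XE_def[abs_def]
    by (rule cont_meas) (intro continuous_intros Ed_cont Ef_cont, use sp in auto)
  show "set_integrable lborel {0<..} (XE s)" by (rule dom_set_int(1)[OF s0 meas XE_bound[OF s]])
  have "\<bar>LINT r:{0<..}|lborel. XE s r\<bar> \<le> (16 * (real m)^2 * (s - s0)^2 * (2 * real m * 8^m / s0)^2 / s0) * s0 * pi"
    by (rule dom_set_int(2)[OF s0 meas XE_bound[OF s]])
  then show "(LINT r:{0<..}|lborel. XE s r) \<le> KE * ((s - s0)/s0)^2" unfolding KE_eq by simp
qed

end


context modctx
begin

lemma xt_X2:
  assumes s: "s0/2 \<le> s" "s \<le> 2 * s0"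
  shows "X2_deriv m (xt s) (xtd s)"
    "(LINT r:{0<..}|lborel. Xt s r) \<le> 2 * Nsq + 2 * (KE * ((s - s0)/s0)^2)"
proof -
  have sp: "s > 0" using s s0 by simp
  have ivl: "set_integrable lborel {a..b} (xtd s) \<and> xt s b - xt s a = (LINT r:{a..b}|lborel. xtd s r)"
    if ab: "0 < a" "a \<le> b" for a b
  proof -
    have i1: "set_integrable lborel {a..b} xi'" and e1: "xi b - xi a = (LINT r:{a..b}|lborel. xi' r)"
      using xd ab by (auto simp: X2_deriv_def)
    have i2: "set_integrable lborel {a..b} (Ed s)" and e2: "Ef s b - Ef s a = (LINT r:{a..b}|lborel. Ed s r)"
      using E_FTC[OF sp ab] by auto
    have "set_integrable lborel {a..b} (\<lambda>r. xi' r + Ed s r)" using i1 i2 by (rule set_integral_add(1))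
    moreover have "(LINT r:{a..b}|lborel. xi' r + Ed s r) = (LINT r:{a..b}|lborel. xi' r) + (LINT r:{a..b}|lborel. Ed s r)"
      using i1 i2 by (rule set_integral_add(2))
    ultimately show ?thesis using e1 e2 by (simp add: xtd_def[abs_def] xt_eq)
  qed
  have g1: "(\<lambda>r. indicator {0<..} r * xi' r) \<in> borel_measurable borel" by (rule X2D_meas[OF xd])
  have g2: "(\<lambda>r. indicator {0<..} r * xi r) \<in> borel_measurable borel" by (rule cont_meas[OF xi_cont])
  have g3: "(\<lambda>r. indicator {0<..} r * Ed s r) \<in> borel_measurable borel"
    by (rule cont_meas) (rule Ed_cont[OF sp], simp)
  have g4: "(\<lambda>r. indicator {0<..} r * Ef s r) \<in> borel_measurable borel"
    by (rule cont_meas) (rule Ef_cont[OF sp])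
  define G1 where "G1 = (\<lambda>r. indicator {0<..} r * xi' r)"
  define G2 where "G2 = (\<lambda>r. indicator {0<..} r * xi r)"
  define G3 where "G3 = (\<lambda>r. indicator {0<..} r * Ed s r)"
  define G4 where "G4 = (\<lambda>r. indicator {0<..} r * Ef s r)"
  have mI: "(\<lambda>r::real. indicator {0<..} r :: real) \<in> borel_measurable borel"
    by (intro borel_measurable_indicator borel_open) simp
  have "(\<lambda>r. indicator {0<..} r * (((G1 r + G3 r)^2 + (real m)^2 * (G2 r + G4 r)^2 / r^2) * r)) \<in> borel_measurable borel"
    using g1 g2 g3 g4 mI unfolding G1_def G2_def G3_def G4_def by measurable
  moreover have "(\<lambda>r. indicator {0<..} r * (((G1 r + G3 r)^2 + (real m)^2 * (G2 r + G4 r)^2 / r^2) * r))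
      = (\<lambda>r. indicator {0<..} r * Xt s r)"
  proof
    fix r :: real
    show "indicator {0<..} r * (((G1 r + G3 r)^2 + (real m)^2 * (G2 r + G4 r)^2 / r^2) * r) = indicator {0<..} r * Xt s r"
      by (cases "r > 0") (auto simp: G1_def G2_def G3_def G4_def Xt_def xtd_def xt_eq indicator_def)
  qed
  ultimately have meas: "(\<lambda>r. indicator {0<..} r * Xt s r) \<in> borel_measurable borel" by simp
  have bint: "set_integrable lborel {0<..} (\<lambda>r. 2 * Xf r + 2 * XE s r)"
    using Xint XE_int(1)[OF s] by (intro set_integral_add(1) set_integrable_mult_right) auto
  have pt: "\<bar>Xt s r\<bar> \<le> 2 * Xf r + 2 * XE s r" if "r \<in> {0<..}" for r
  proof -
    have r: "r > 0" using that by simp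
    have q: "(a + b)^2 \<le> 2 * a^2 + 2 * b^2" for a b :: real
      using sum_squares_ge_zero[of "a - b" 0] by (simp add: power2_eq_square algebra_simps)
    have "Xt s r = ((xi' r + Ed s r)^2 + (real m)^2 * ((xi r + Ef s r)^2 / r^2)) * r"
      by (simp add: Xt_def xtd_def xt_eq)
    also have "\<dots> \<le> ((2 * (xi' r)^2 + 2 * (Ed s r)^2) + (real m)^2 * ((2 * (xi r)^2 + 2 * (Ef s r)^2) / r^2)) * r"
      using q r by (intro mult_right_mono add_mono mult_left_mono divide_right_mono) auto
    also have "\<dots> = 2 * Xf r + 2 * XE s r" using r by (simp add: Xf_def XE_def field_simps)
    finally have "Xt s r \<le> 2 * Xf r + 2 * XE s r" .
    moreover have "Xt s r \<ge> 0" using r by (simp add: Xt_def)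
    ultimately show ?thesis by simp
  qed
  have xint: "set_integrable lborel {0<..} (Xt s)"
    by (rule set_int_bound[OF bint meas]) (rule pt)
  show "X2_deriv m (xt s) (xtd s)"
    unfolding X2_deriv_def using ivl xint by (simp add: Xt_def[abs_def])
  have "(LINT r:{0<..}|lborel. Xt s r) \<le> (LINT r:{0<..}|lborel. 2 * Xf r + 2 * XE s r)"
    by (rule set_mono[OF xint bint]) (use pt in \<open>simp add: abs_le_iff\<close>)
  also have "\<dots> = 2 * Nsq + 2 * (LINT r:{0<..}|lborel. XE s r)"
    using Xint XE_int(1)[OF s] by (simp add: set_integral_add(2) Nsq_def)
  also have "\<dots> \<le> 2 * Nsq + 2 * (KE * ((s - s0)/s0)^2)"
    using XE_int(2)[OF s] by simp
  finally show "(LINT r:{0<..}|lborel. Xt s r) \<le> 2 * Nsq + 2 * (KE * ((s - s0)/s0)^2)" .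
qed

lemma xt_norm:
  assumes s: "s0/2 \<le> s" "s \<le> 2 * s0"
  shows "X2_norm m (xt s) \<le> sqrt (2 * Nsq + 2 * (KE * ((s - s0)/s0)^2))"
proof -
  have "X2_norm m (xt s) = sqrt (LINT r:{0<..}|lborel. Xt s r)"
    using X2_norm_eq[OF xt_X2(1)[OF s]] by (simp add: Xt_def[abs_def])
  also have "\<dots> \<le> sqrt (2 * Nsq + 2 * (KE * ((s - s0)/s0)^2))"
    using xt_X2(2)[OF s] by simp
  finally show ?thesis .
qed

end


theorem lemma3p6:
  fixes m :: nat
  assumes "m \<ge> 4"
  shows "\<exists>\<epsilon>0 > 0. \<exists>C > 0. \<forall>s0 > 0. \<forall>\<xi>.
           inX2 m \<xi> \<and> X2_norm m \<xi> \<le> \<epsilon>0 \<longrightarrow>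
           (\<exists>s > 0. \<exists>\<xi>t. inX2 m \<xi>t \<and>
              (\<forall>r > 0. Qs m s0 r + \<xi> r = Qs m s r + \<xi>t r) \<and>
              L2r_inner \<xi>t (hs m s) = 0 \<and>
              \<bar>s / s0 - 1\<bar> + X2_norm m \<xi>t \<le> C * X2_norm m \<xi>)"
proof -
  define c where "c = real m / (8 * 256^m)"
  define K where "K = 64 * pi * (real m)^4 * 64^m"
  define C where "C = 48 / c + sqrt (2 + 2 * K * (48 / c)^2)"
  have cpos: "c > 0" using assms by (simp add: c_def)
  have Kpos: "K \<ge> 0" by (simp add: K_def)
  have Cpos: "C > 0" using cpos Kpos by (simp add: C_def add_pos_nonneg)
  have main: "\<exists>s > 0. \<exists>\<xi>t. inX2 m \<xi>t \<and>
              (\<forall>r > 0. Qs m s0 r + \<xi> r = Qs m s r + \<xi>t r) \<and>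
              L2r_inner \<xi>t (hs m s) = 0 \<and>
              \<bar>s / s0 - 1\<bar> + X2_norm m \<xi>t \<le> C * X2_norm m \<xi>"
    if s0: "s0 > 0" and xin: "inX2 m \<xi>" and small: "X2_norm m \<xi> \<le> c / 96" for s0 \<xi>
  proof -
    obtain \<xi>' where xd: "X2_deriv m \<xi> \<xi>'" using xin by (auto simp: inX2_def)
    interpret M: modctx m s0 \<xi> \<xi>' using assms s0 xd by unfold_locales
    have cG: "M.cG = c" by (simp add: M.cG_def c_def)
    have KE: "M.KE = K" by (simp add: M.KE_def K_def)
    define N where "N = X2_norm m \<xi>"
    have N: "N = sqrt M.Nsq" unfolding N_def M.Nsq_def M.Xf_def[abs_def] by (rule X2_norm_eq[OF xd])
    have N0: "N \<ge> 0" unfolding N by (rule real_sqrt_ge_zero[OF M.Nsq_nonneg])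
    have Nsq: "M.Nsq = N^2"
    proof -
      have "(sqrt M.Nsq)^2 = M.Nsq" by (rule real_sqrt_pow2[OF M.Nsq_nonneg])
      then show ?thesis using N by simp
    qed
    define \<delta> where "\<delta> = 48 * N / c"
    have d0: "\<delta> \<ge> 0" using N0 cpos by (simp add: \<delta>_def)
    have dle: "\<delta> \<le> 1/2" using small cpos by (simp add: \<delta>_def N_def field_simps)
    define s1 where "s1 = s0 * (1 - \<delta>)"
    define s2 where "s2 = s0 * (1 + \<delta>)"
    have s1r: "s0/2 \<le> s1" "s1 \<le> 2 * s0" using s0 d0 dle by (auto simp: s1_def field_simps)
    have s2r: "s0/2 \<le> s2" "s2 \<le> 2 * s0" using s0 d0 dle by (auto simp: s2_def field_simps)
    have s12: "s1 \<le> s2" using s0 d0 by (simp add: s1_def s2_def)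
    have Pb: "\<bar>M.P s\<bar> \<le> 24 * s0^2 * N" if "s0/2 \<le> s" "s \<le> 2 * s0" for s
    proof -
      have sp: "s > 0" using that s0 by simp
      have "\<bar>M.P s\<bar> \<le> 6 * s^2 * N" using M.P_int(2)[OF sp] N by (simp add: M.P_def)
      also have "\<dots> \<le> 6 * (2 * s0)^2 * N"
        using that sp N0 by (intro mult_right_mono mult_left_mono power_mono) auto
      finally show ?thesis by (simp add: power_mult_distrib)
    qed
    have Fs: "M.F s = M.P s + M.G s" if "s0/2 \<le> s" "s \<le> 2 * s0" for s
      using M.F_split(1)[of s] that s0 by simp
    have F1: "M.F s1 \<ge> 0" and F2: "M.F s2 \<le> 0"
    proof -
      have "M.F s1 \<ge> 0 \<and> M.F s2 \<le> 0"
      proof (cases "\<delta> = 0")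
        case True
        then have N00: "N = 0" using cpos by (simp add: \<delta>_def)
        have ss: "s1 = s0" "s2 = s0" using True by (auto simp: s1_def s2_def)
        have G0: "M.G s0 = 0" by (simp add: M.G_def M.Gf_def)
        have "\<bar>M.P s0\<bar> \<le> 0" using Pb[of s0] s0 N00 by simp
        then have "M.F s0 = 0" using Fs[of s0] s0 G0 by simp
        then show ?thesis using ss by simp
      next
        case False
        then have dp: "\<delta> > 0" using d0 by simp
        have cd: "c * \<delta> = 48 * N" using cpos by (simp add: \<delta>_def)
        have g2: "- (s2 - s0) * M.G s2 \<ge> c * s0 * (s2 - s0)^2" using M.G_sign[OF s2r] cG by simp
        have "s2 - s0 = s0 * \<delta>" by (simp add: s2_def algebra_simps)
        then have "(s0 * \<delta>) * (- M.G s2) \<ge> (s0 * \<delta>) * (c * s0 * (s0 * \<delta>))"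
          using g2 by (simp add: power2_eq_square algebra_simps)
        then have "- M.G s2 \<ge> c * s0 * (s0 * \<delta>)"
          by (rule mult_left_le_imp_le) (use s0 dp in simp)
        moreover have "c * s0 * (s0 * \<delta>) = 48 * s0^2 * N"
        proof -
          have "c * s0 * (s0 * \<delta>) = (c * \<delta>) * s0^2" by (simp add: power2_eq_square mult_ac)
          then show ?thesis using cd by simp
        qed
        ultimately have G2: "M.G s2 \<le> - 48 * s0^2 * N" by linarith
        have g1: "- (s1 - s0) * M.G s1 \<ge> c * s0 * (s1 - s0)^2" using M.G_sign[OF s1r] cG by simp
        have e1: "s1 - s0 = - (s0 * \<delta>)" by (simp add: s1_def algebra_simps)
        have "- (- (s0 * \<delta>)) * M.G s1 \<ge> c * s0 * (- (s0 * \<delta>))^2" using g1 unfolding e1 .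
        then have "(s0 * \<delta>) * M.G s1 \<ge> (s0 * \<delta>) * (c * s0 * (s0 * \<delta>))"
          by (simp add: power2_eq_square mult_ac)
        then have "M.G s1 \<ge> c * s0 * (s0 * \<delta>)"
          by (rule mult_left_le_imp_le) (use s0 dp in simp)
        moreover have "c * s0 * (s0 * \<delta>) = 48 * s0^2 * N"
        proof -
          have "c * s0 * (s0 * \<delta>) = (c * \<delta>) * s0^2" by (simp add: power2_eq_square mult_ac)
          then show ?thesis using cd by simp
        qed
        ultimately have G1: "M.G s1 \<ge> 48 * s0^2 * N" by linarith
        have "M.F s2 \<le> 0" using Fs[OF s2r] Pb[OF s2r] G2 s0 N0 by (simp add: abs_le_iff) 
        moreover have "M.F s1 \<ge> 0" using Fs[OF s1r] Pb[OF s1r] G1 s0 N0 by (simp add: abs_le_iff)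
        ultimately show ?thesis by simp
      qed
      then show "M.F s1 \<ge> 0" "M.F s2 \<le> 0" by auto
    qed
    have cont: "continuous_on {s1..s2} M.F"
      by (rule continuous_on_subset[OF M.F_cont]) (use s1r s2r in auto)
    obtain s where s: "s1 \<le> s" "s \<le> s2" and Fz: "M.F s = 0"
      using IVT2'[of M.F s2 0 s1, OF F2 F1 s12 cont] by blast
    have sr: "s0/2 \<le> s" "s \<le> 2 * s0" using s s1r s2r by auto
    have sp: "s > 0" using sr s0 by simp
    have xt_in: "inX2 m (M.xt s)" using M.xt_X2(1)[OF sr] by (auto simp: inX2_def)
    have eqn: "\<forall>r > 0. Qs m s0 r + \<xi> r = Qs m s r + M.xt s r" by (simp add: M.xt_def)
    have orth: "L2r_inner (M.xt s) (hs m s) = 0"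
    proof -
      have "M.xt s = (\<lambda>r. \<xi> r + Qs m s0 r - Qs m s r)" by (simp add: M.xt_def[abs_def])
      then show ?thesis using Fz by (simp add: M.F_def)
    qed
    have dev: "\<bar>s / s0 - 1\<bar> \<le> \<delta>"
    proof -
      have "\<bar>s - s0\<bar> \<le> s0 * \<delta>" using s s0 by (simp add: s1_def s2_def abs_le_iff algebra_simps)
      moreover have "s / s0 - 1 = (s - s0) / s0" using s0 by (simp add: field_simps)
      ultimately show ?thesis using s0 by (simp add: abs_divide pos_divide_le_eq mult.commute)
    qed
    have dev2: "((s - s0)/s0)^2 \<le> \<delta>^2"
    proof -
      have "\<bar>(s - s0)/s0\<bar> \<le> \<delta>" using dev s0 by (simp add: field_simps)
      then show ?thesis by (metis abs_ge_zero power2_abs power_mono)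
    qed
    have "X2_norm m (M.xt s) \<le> sqrt (2 * M.Nsq + 2 * (M.KE * ((s - s0)/s0)^2))" by (rule M.xt_norm[OF sr])
    also have "\<dots> \<le> sqrt (2 * N^2 + 2 * (K * \<delta>^2))"
      using dev2 Kpos by (simp add: Nsq KE mult_left_mono)
    also have "2 * N^2 + 2 * (K * \<delta>^2) = (2 + 2 * K * (48 / c)^2) * N^2"
      using cpos by (simp add: \<delta>_def field_simps power2_eq_square)
    also have "sqrt \<dots> = sqrt (2 + 2 * K * (48 / c)^2) * N"
      using N0 by (simp add: real_sqrt_mult)
    finally have nb: "X2_norm m (M.xt s) \<le> sqrt (2 + 2 * K * (48 / c)^2) * N" .
    have "\<bar>s / s0 - 1\<bar> + X2_norm m (M.xt s) \<le> 48 / c * N + sqrt (2 + 2 * K * (48 / c)^2) * N"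
      using dev nb by (simp add: \<delta>_def)
    also have "\<dots> = C * X2_norm m \<xi>" by (simp add: C_def N_def algebra_simps)
    finally show ?thesis using sp xt_in eqn orth by blast
  qed
  show ?thesis
    by (rule exI[of _ "c / 96"], rule conjI, use cpos in simp, rule exI[of _ C], rule conjI, rule Cpos)
       (use main in blast)
qed


end
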